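(* In a knapsack budgeted game $(N,v)$ with representation $(\{(l_1,w_1),\ldots,(l_{|N|},w_{|N|})\}, l_{\mathrm{bin}})$, the Shapley value $\phi_i(v)$ of any given agent $i$ can be computed exactly in time $O\big(l_{\mathrm{bin}}(w_{\max}+1)^{l_{\mathrm{bin}}+1}|N|^2\big)$, where $w_{\max}=\lceil l_{\mathrm{bin}}\cdot \max_k w_k/l_k\rceil$.
   Context: A cooperative game $(N,v)$ consists of a finite set $N$ of agents and a function $v:2^N\to\mathbb R$ with $v(\emptyset)=0$. The Shapley value of agent $i$ is $\phi_i(v)=\sum_{S\subseteq N\setminus\{i\}}\frac{|S|!\,(|N|-|S|-1)!}{|N|!}\big(v(S\cup\{i\})-v(S)\big)$. A knapsack budgeted game is a cooperative game $(N,v)$, with agents labeled $1,\ldots,|N|$, given by nonnegative integers $(\{(l_1,w_1),\ldots,(l_{|N|},w_{|N|})\}, l_{\mathrm{bin}})$ with $0<l_i\le l_{\mathrm{bin}}$ for all $i$, such that $v(S)=\max_{S'\subseteq S:\ l(S')\le l_{\mathrm{bin}}} w(S')$ for all $S\subseteq N$, where $l(S')=\sum_{k\in S'}l_k$ and $w(S')=\sum_{k\in S'}w_k$. Running times count arithmetic operations at unit cost. *)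

theory Defs
  imports Complex_Main
begin

definition shapley :: "nat \<Rightarrow> (nat set \<Rightarrow> real) \<Rightarrow> nat \<Rightarrow> real" where
  "shapley n v i =
     (\<Sum>S\<in>Pow ({1..n} - {i}).
        (fact (card S) * fact (n - card S - 1) / fact n) * (v (S \<union> {i}) - v S))"

definition knapsack_game :: "(nat \<Rightarrow> nat) \<Rightarrow> (nat \<Rightarrow> nat) \<Rightarrow> nat \<Rightarrow> nat set \<Rightarrow> real" where
  "knapsack_game l w lbin S =
     real (Max {(\<Sum>k\<in>S'. w k) | S'. S' \<subseteq> S \<and> (\<Sum>k\<in>S'. l k) \<le> lbin})"

definition valid_knapsack :: "nat \<Rightarrow> (nat \<Rightarrow> nat) \<Rightarrow> nat \<Rightarrow> bool" where
  "valid_knapsack n l lbin = (\<forall>k\<in>{1..n}. 0 < l k \<and> l k \<le> lbin)"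

definition w_max :: "nat \<Rightarrow> (nat \<Rightarrow> nat) \<Rightarrow> (nat \<Rightarrow> nat) \<Rightarrow> nat \<Rightarrow> int" where
  "w_max n l w lbin = \<lceil>real lbin * (MAX k\<in>{1..n}. real (w k) / real (l k))\<rceil>"

type_synonym mem = "nat \<Rightarrow> rat"

datatype expr =
    Const rat
  | Load expr
  | Plus expr expr
  | Minus expr expr
  | Times expr expr
  | Divide expr expr

datatype bexp = Le expr expr | Not bexp | And bexp bexp

datatype com =
    Skip
  | Store expr expr
  | Seq com com
  | If bexp com com
  | While bexp com

definition addr :: "rat \<Rightarrow> nat" where
  "addr x = nat \<lfloor>x\<rfloor>"

fun eval :: "expr \<Rightarrow> mem \<Rightarrow> rat" where
  "eval (Const c) M = c"
| "eval (Load e) M = M (addr (eval e M))"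
| "eval (Plus a b) M = eval a M + eval b M"
| "eval (Minus a b) M = eval a M - eval b M"
| "eval (Times a b) M = eval a M * eval b M"
| "eval (Divide a b) M = eval a M / eval b M"

fun beval :: "bexp \<Rightarrow> mem \<Rightarrow> bool" where
  "beval (Le a b) M = (eval a M \<le> eval b M)"
| "beval (Not b) M = (\<not> beval b M)"
| "beval (And a b) M = (beval a M \<and> beval b M)"

fun ecost :: "expr \<Rightarrow> nat" where
  "ecost (Const c) = 1"
| "ecost (Load e) = 1 + ecost e"
| "ecost (Plus a b) = 1 + ecost a + ecost b"
| "ecost (Minus a b) = 1 + ecost a + ecost b"
| "ecost (Times a b) = 1 + ecost a + ecost b"
| "ecost (Divide a b) = 1 + ecost a + ecost b"

fun bcost :: "bexp \<Rightarrow> nat" where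
  "bcost (Le a b) = 1 + ecost a + ecost b"
| "bcost (Not b) = 1 + bcost b"
| "bcost (And a b) = 1 + bcost a + bcost b"

inductive exec :: "com \<Rightarrow> mem \<Rightarrow> nat \<Rightarrow> mem \<Rightarrow> bool" where
  exec_Skip: "exec Skip M 1 M"
| exec_Store: "exec (Store a e) M (1 + ecost a + ecost e)
                  (M(addr (eval a M) := eval e M))"
| exec_Seq: "exec c1 M t1 M1 \<Longrightarrow> exec c2 M1 t2 M2 \<Longrightarrow> exec (Seq c1 c2) M (t1 + t2) M2"
| exec_IfT: "beval b M \<Longrightarrow> exec c1 M t M' \<Longrightarrow> exec (If b c1 c2) M (1 + bcost b + t) M'"
| exec_IfF: "\<not> beval b M \<Longrightarrow> exec c2 M t M' \<Longrightarrow> exec (If b c1 c2) M (1 + bcost b + t) M'"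
| exec_WhileF: "\<not> beval b M \<Longrightarrow> exec (While b c) M (1 + bcost b) M"
| exec_WhileT: "beval b M \<Longrightarrow> exec c M t1 M1 \<Longrightarrow> exec (While b c) M1 t2 M2 \<Longrightarrow>
                  exec (While b c) M (1 + bcost b + t1 + t2) M2"

text \<open>Input encoding of an instance (l, w, lbin) with n agents and query agent i:
  register 0 holds n, registers 1..n hold l_1..l_n, registers n+1..2n hold w_1..w_n,
  register 2n+1 holds lbin, register 2n+2 holds i; all other registers are 0.
  The output is read from register 0 at termination.\<close>

definition input_mem :: "nat \<Rightarrow> (nat \<Rightarrow> nat) \<Rightarrow> (nat \<Rightarrow> nat) \<Rightarrow> nat \<Rightarrow> nat \<Rightarrow> mem" where
  "input_mem n l w lbin i = (\<lambda>r.
     if r = 0 then of_nat n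
     else if r \<le> n then of_nat (l r)
     else if r \<le> 2 * n then of_nat (w (r - n))
     else if r = 2 * n + 1 then of_nat lbin
     else if r = 2 * n + 2 then of_nat i
     else 0)"

end

theory Submission
  imports Defs
begin

definition spec :: "com \<Rightarrow> mem \<Rightarrow> nat \<Rightarrow> (mem \<Rightarrow> bool) \<Rightarrow> bool" where
  "spec c M b Q \<longleftrightarrow> (\<exists>t M'. exec c M t M' \<and> t \<le> b \<and> Q M')"

fun lf :: "com \<Rightarrow> bool" where
  "lf Skip = True" | "lf (Store a e) = True" | "lf (Seq c1 c2) = (lf c1 \<and> lf c2)"
| "lf (If b c1 c2) = (lf c1 \<and> lf c2)" | "lf (While b c) = False"

fun run :: "com \<Rightarrow> mem \<Rightarrow> mem" where
  "run Skip M = M"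
| "run (Store a e) M = M(addr (eval a M) := eval e M)"
| "run (Seq c1 c2) M = run c2 (run c1 M)"
| "run (If b c1 c2) M = (if beval b M then run c1 M else run c2 M)"
| "run (While b c) M = M"

fun cst :: "com \<Rightarrow> nat" where
  "cst Skip = 1" | "cst (Store a e) = 1 + ecost a + ecost e"
| "cst (Seq c1 c2) = cst c1 + cst c2"
| "cst (If b c1 c2) = 1 + bcost b + max (cst c1) (cst c2)"
| "cst (While b c) = 0"

lemma lf_exec: "lf c \<Longrightarrow> \<exists>t. exec c M t (run c M) \<and> t \<le> cst c"
proof (induction c arbitrary: M)
  case Skip then show ?case by (auto intro: exec.intros)
next
  case (Store a e) have "run (Store a e) M = M(addr (eval a M) := eval e M)" "cst (Store a e) = 1 + ecost a + ecost e" by simp_all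
  then show ?case using exec_Store[of a e M] by (metis order_refl)
next
  case (Seq c1 c2)
  then obtain t1 where 1: "exec c1 M t1 (run c1 M)" "t1 \<le> cst c1" by auto
  from Seq obtain t2 where 2: "exec c2 (run c1 M) t2 (run c2 (run c1 M))" "t2 \<le> cst c2" by auto
  show ?case using exec_Seq[OF 1(1) 2(1)] 1(2) 2(2) by force
next
  case (If b c1 c2)
  show ?case
  proof (cases "beval b M")
    case True
    with If obtain t where "exec c1 M t (run c1 M)" "t \<le> cst c1" by auto
    with True show ?thesis by (force intro: exec_IfT)
  next
    case False
    with If obtain t where "exec c2 M t (run c2 M)" "t \<le> cst c2" by auto
    with False show ?thesis by (force intro: exec_IfF)
  qed
qed auto

lemma spec_lf: "lf c \<Longrightarrow> Q (run c M) \<Longrightarrow> cst c \<le> b \<Longrightarrow> spec c M b Q"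
  unfolding spec_def using lf_exec by (meson order_trans)

lemma spec_Seq: "spec c1 M b1 (\<lambda>M1. spec c2 M1 b2 Q) \<Longrightarrow> b1 + b2 \<le> b \<Longrightarrow> spec (Seq c1 c2) M b Q"
  unfolding spec_def by (meson add_le_mono exec_Seq order_trans)

lemma spec_mono: "spec c M b Q \<Longrightarrow> b \<le> b' \<Longrightarrow> (\<And>M. Q M \<Longrightarrow> Q' M) \<Longrightarrow> spec c M b' Q'"
  unfolding spec_def by (meson order_trans)

lemma spec_If: "(beval bb M \<Longrightarrow> spec c1 M b1 Q) \<Longrightarrow> (\<not> beval bb M \<Longrightarrow> spec c2 M b1 Q)
   \<Longrightarrow> 1 + bcost bb + b1 \<le> b \<Longrightarrow> spec (If bb c1 c2) M b Q"
  unfolding spec_def by (cases "beval bb M") (fastforce intro: exec_IfT exec_IfF)+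

lemma spec_While_aux:
  assumes body: "\<And>j M. j < m \<Longrightarrow> I j M \<Longrightarrow> beval bb M \<and> spec c M B (I (Suc j))"
    and fin: "\<And>M. I m M \<Longrightarrow> \<not> beval bb M \<and> Q M"
  shows "j \<le> m \<Longrightarrow> I j M \<Longrightarrow> spec (While bb c) M ((m - j) * (1 + bcost bb + B) + 1 + bcost bb) Q"
proof (induction "m - j" arbitrary: j M)
  case 0
  then have "j = m" by auto
  with 0 fin have "\<not> beval bb M" "Q M" by auto
  then show ?case unfolding spec_def using exec_WhileF[of bb M c] \<open>j = m\<close> by fastforce
next
  case (Suc k)
  then have jm: "j < m" by auto
  from body[OF jm Suc.prems(2)] obtain t1 M1 where b: "beval bb M" "exec c M t1 M1" "t1 \<le> B" "I (Suc j) M1"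
    unfolding spec_def by auto
  have "k = m - Suc j" using Suc.hyps(2) by auto
  from Suc.hyps(1)[OF this _ b(4)] jm obtain t2 M2 where
    r: "exec (While bb c) M1 t2 M2" "t2 \<le> (m - Suc j) * (1 + bcost bb + B) + 1 + bcost bb" "Q M2"
    unfolding spec_def by auto
  have "m - j = Suc (m - Suc j)" using jm by auto
  then have "1 + bcost bb + t1 + t2 \<le> (m - j) * (1 + bcost bb + B) + 1 + bcost bb"
    using b(3) r(2) by simp
  then show ?case unfolding spec_def using exec_WhileT[OF b(1) b(2) r(1)] r(3) by blast
qed

lemma spec_While:
  assumes "I 0 M"
    and "\<And>j M. j < m \<Longrightarrow> I j M \<Longrightarrow> beval bb M \<and> spec c M B (I (Suc j))"
    and "\<And>M. I m M \<Longrightarrow> \<not> beval bb M \<and> Q M"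
    and "m * (1 + bcost bb + B) + 1 + bcost bb \<le> b"
  shows "spec (While bb c) M b Q"
  using spec_While_aux[of m I bb c B Q 0 M, OF assms(2,3)] assms(1,4) spec_mono by force


definition prof :: "(nat \<Rightarrow> nat) \<Rightarrow> (nat \<Rightarrow> nat) \<Rightarrow> nat set \<Rightarrow> nat \<Rightarrow> nat" where
  "prof l w S c = Max {(\<Sum>k\<in>S'. w k) | S'. S' \<subseteq> S \<and> (\<Sum>k\<in>S'. l k) \<le> c}"

lemma knap_prof: "knapsack_game l w lbin S = real (prof l w S lbin)"
  unfolding knapsack_game_def prof_def by simp

lemma prof_set_fin: "finite S \<Longrightarrow> finite {(\<Sum>k\<in>S'. w k) | S'. S' \<subseteq> S \<and> (\<Sum>k\<in>S'. l k) \<le> c}"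
proof -
  assume "finite S"
  have "{(\<Sum>k\<in>S'. w k) | S'. S' \<subseteq> S \<and> (\<Sum>k\<in>S'. l k) \<le> c} \<subseteq> (\<lambda>S'. \<Sum>k\<in>S'. w k) ` Pow S" by auto
  then show ?thesis using \<open>finite S\<close> finite_subset by blast
qed

lemma prof_ge: "finite S \<Longrightarrow> S' \<subseteq> S \<Longrightarrow> (\<Sum>k\<in>S'. l k) \<le> c \<Longrightarrow> (\<Sum>k\<in>S'. w k) \<le> prof l w S c"
  unfolding prof_def by (rule Max_ge[OF prof_set_fin]) auto

lemma prof_obtain: assumes "finite S"
  obtains S' where "S' \<subseteq> S" "(\<Sum>k\<in>S'. l k) \<le> c" "prof l w S c = (\<Sum>k\<in>S'. w k)"
proof -
  have "prof l w S c \<in> {(\<Sum>k\<in>S'. w k) | S'. S' \<subseteq> S \<and> (\<Sum>k\<in>S'. l k) \<le> c}"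
    unfolding prof_def by (rule Max_in[OF prof_set_fin[OF assms]]) auto
  then show ?thesis using that by blast
qed

lemma prof_empty: "prof l w {} c = 0"
proof -
  obtain S' where "S' \<subseteq> {}" "prof l w {} c = (\<Sum>k\<in>S'. w k)" using prof_obtain[of "{}" l c w] by blast
  then show ?thesis by simp
qed

lemma prof_insert:
  assumes fin: "finite S" and k: "k \<notin> S"
  shows "prof l w (insert k S) c = max (prof l w S c) (if l k \<le> c then prof l w S (c - l k) + w k else 0)"
proof (rule antisym)
  obtain S' where S': "S' \<subseteq> insert k S" "(\<Sum>j\<in>S'. l j) \<le> c" "prof l w (insert k S) c = (\<Sum>j\<in>S'. w j)"
    using prof_obtain[of "insert k S" l c w] fin by auto
  show "prof l w (insert k S) c \<le> max (prof l w S c) (if l k \<le> c then prof l w S (c - l k) + w k else 0)"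
  proof (cases "k \<in> S'")
    case True
    have fS': "finite S'" using S'(1) fin finite_subset by blast
    have sl: "(\<Sum>j\<in>S'. l j) = l k + (\<Sum>j\<in>S'-{k}. l j)" using True fS' by (simp add: sum.remove)
    have sw: "(\<Sum>j\<in>S'. w j) = w k + (\<Sum>j\<in>S'-{k}. w j)" using True fS' by (simp add: sum.remove)
    have "S' - {k} \<subseteq> S" using S'(1) by auto
    moreover have "(\<Sum>j\<in>S'-{k}. l j) \<le> c - l k" using sl S'(2) by auto
    ultimately have "(\<Sum>j\<in>S'-{k}. w j) \<le> prof l w S (c - l k)" using prof_ge fin by blast
    moreover have "l k \<le> c" using sl S'(2) by auto
    ultimately show ?thesis using S'(3) sw by auto
  next
    case False
    then have "S' \<subseteq> S" using S'(1) by auto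
    then show ?thesis using prof_ge[OF fin _ S'(2), of w] S'(3) by auto
  qed
next
  have fi: "finite (insert k S)" using fin by auto
  have a: "prof l w S c \<le> prof l w (insert k S) c"
  proof -
    obtain S' where S': "S' \<subseteq> S" "(\<Sum>j\<in>S'. l j) \<le> c" "prof l w S c = (\<Sum>j\<in>S'. w j)"
      using prof_obtain[OF fin] by blast
    then show ?thesis using prof_ge[OF fi, of S' l c w] by auto
  qed
  have b: "prof l w S (c - l k) + w k \<le> prof l w (insert k S) c" if "l k \<le> c"
  proof -
    obtain S' where S': "S' \<subseteq> S" "(\<Sum>j\<in>S'. l j) \<le> c - l k" "prof l w S (c - l k) = (\<Sum>j\<in>S'. w j)"
      using prof_obtain[OF fin] by blast
    have fS': "finite S'" using S'(1) fin finite_subset by blast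
    have kS': "k \<notin> S'" using S'(1) k by auto
    have "insert k S' \<subseteq> insert k S" using S'(1) by auto
    moreover have "(\<Sum>j\<in>insert k S'. l j) \<le> c" using fS' kS' S'(2) that by simp
    ultimately have "(\<Sum>j\<in>insert k S'. w j) \<le> prof l w (insert k S) c" using prof_ge[OF fi] by blast
    then show ?thesis using fS' kS' S'(3) by simp
  qed
  show "max (prof l w S c) (if l k \<le> c then prof l w S (c - l k) + w k else 0) \<le> prof l w (insert k S) c"
    using a b by auto
qed

lemma sum_digits_lt:
  fixes B :: nat
  shows "(\<And>c. c < m \<Longrightarrow> f c < B) \<Longrightarrow> (\<Sum>c<m. f c * B ^ c) < B ^ m"
proof (induction m)
  case 0 then show ?case by simp
next
  case (Suc m)
  then have IH: "(\<Sum>c<m. f c * B ^ c) < B ^ m" by auto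
  have fm: "f m + 1 \<le> B" using Suc.prems[of m] by auto
  have "(\<Sum>c<Suc m. f c * B ^ c) = (\<Sum>c<m. f c * B ^ c) + f m * B ^ m" by simp
  also have "\<dots> < B ^ m + f m * B ^ m" using IH by simp
  also have "\<dots> = (f m + 1) * B ^ m" by simp
  also have "\<dots> \<le> B * B ^ m" using fm by (rule mult_right_mono) simp
  finally show ?case by simp
qed

lemma div_add_mult: "(0::nat) < b \<Longrightarrow> (r + b * t) div b = r div b + t"
  by simp

lemma sum_digits_dig:
  fixes B :: nat
  shows "(\<And>c. c < m \<Longrightarrow> f c < B) \<Longrightarrow> j < m \<Longrightarrow> (\<Sum>c<m. f c * B ^ c) div B ^ j mod B = f j"
proof (induction m arbitrary: j)
  case 0 then show ?case by simp
next
  case (Suc m)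
  have Bpos: "0 < B" using Suc.prems(1)[of 0] by auto
  define r where "r = (\<Sum>c<m. f c * B ^ c)"
  have rl: "r < B ^ m" unfolding r_def using Suc.prems(1) by (intro sum_digits_lt) auto
  have S: "(\<Sum>c<Suc m. f c * B ^ c) = r + f m * B ^ m" unfolding r_def by simp
  show ?case
  proof (cases "j = m")
    case True
    have "(r + f m * B ^ m) div B ^ m = f m"
      using rl Bpos by (simp add: div_add_mult[of "B^m" r "f m", simplified mult.commute] div_less)
    then show ?thesis using S True Suc.prems(1)[of m] by simp
  next
    case False
    then have jm: "j < m" using Suc.prems(2) by auto
    have "B ^ m = B ^ j * B ^ (m - j)" using jm by (simp add: power_add[symmetric])
    then have e1: "f m * B ^ m = B ^ j * (f m * B ^ (m - j))" by simp
    have "(r + f m * B ^ m) div B ^ j = r div B ^ j + f m * B ^ (m - j)"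
      unfolding e1 using Bpos by (intro div_add_mult) simp
    moreover have "m - j = Suc (m - j - 1)" using jm by auto
    then have e2: "f m * B ^ (m - j) = B * (f m * B ^ (m - j - 1))"
      by (metis mult.left_commute power_Suc)
    ultimately have "(r + f m * B ^ m) div B ^ j mod B = r div B ^ j mod B"
      by simp
    also have "\<dots> = f j" unfolding r_def using Suc.IH[of j] Suc.prems(1) jm by auto
    finally show ?thesis using S by simp
  qed
qed


locale KS =
  fixes n :: nat and l w :: "nat \<Rightarrow> nat" and lbin i :: nat
  assumes valid: "valid_knapsack n l lbin" and irange: "i \<in> {1..n}"
begin

definition "W = nat (w_max n l w lbin)"
definition "B = Suc W"
definition "Q = B ^ Suc lbin"
definition dig :: "nat \<Rightarrow> nat \<Rightarrow> nat" where "dig x c = x div B ^ c mod B"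
definition enc :: "(nat \<Rightarrow> nat) \<Rightarrow> nat" where "enc f = (\<Sum>c<Suc lbin. f c * B ^ c)"
definition eS :: "nat set \<Rightarrow> nat" where "eS S = enc (prof l w S)"
definition gf :: "nat \<Rightarrow> nat \<Rightarrow> nat \<Rightarrow> nat" where
  "gf k x c = (if c < l k then dig x c else min W (max (dig x c) (dig x (c - l k) + w k)))"
definition G :: "nat \<Rightarrow> nat \<Rightarrow> nat" where "G k x = enc (gf k x)"
definition cntf :: "nat set \<Rightarrow> nat \<Rightarrow> nat \<Rightarrow> nat" where
  "cntf P s x = card {S. S \<subseteq> P \<and> card S = s \<and> eS S = x}"

lemma npos: "1 \<le> n" using irange by auto

lemma lk: "k \<in> {1..n} \<Longrightarrow> 0 < l k \<and> l k \<le> lbin"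
  using valid unfolding valid_knapsack_def by auto

lemma lbin_pos: "1 \<le> lbin" using lk[OF irange] by auto

definition "rr = (MAX k\<in>{1..n}. real (w k) / real (l k))"

lemma rr_ge: "k \<in> {1..n} \<Longrightarrow> real (w k) / real (l k) \<le> rr"
  unfolding rr_def by (rule Max_ge) auto

lemma rr_nonneg: "0 \<le> rr"
  using rr_ge[OF irange] by (meson divide_nonneg_nonneg of_nat_0_le_iff order_trans)

lemma W_ge: "real lbin * rr \<le> real W"
proof -
  have "0 \<le> real lbin * rr" using rr_nonneg by simp
  then have "0 \<le> w_max n l w lbin" unfolding w_max_def rr_def[symmetric] by simp
  then have "real W = real_of_int (w_max n l w lbin)" unfolding W_def by simp
  then show ?thesis unfolding w_max_def rr_def[symmetric] by (simp add: le_of_int_ceiling)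
qed

lemma W_eq: "real_of_int (w_max n l w lbin) = real W"
proof -
  have "0 \<le> real lbin * rr" using rr_nonneg by simp
  then have "0 \<le> w_max n l w lbin" unfolding w_max_def rr_def[symmetric] by simp
  then show ?thesis unfolding W_def by simp
qed

lemma Bpos: "0 < B" unfolding B_def by simp

lemma prof_le_W: assumes S: "S \<subseteq> {1..n}" and c: "c \<le> lbin" shows "prof l w S c \<le> W"
proof -
  have fin: "finite S" using S finite_subset by blast
  obtain S' where S': "S' \<subseteq> S" "(\<Sum>k\<in>S'. l k) \<le> c" "prof l w S c = (\<Sum>k\<in>S'. w k)"
    using prof_obtain[OF fin] by blast
  have "real (\<Sum>k\<in>S'. w k) = (\<Sum>k\<in>S'. real (w k))" by simp
  also have "\<dots> \<le> (\<Sum>k\<in>S'. real (l k) * rr)"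
  proof (rule sum_mono)
    fix k assume "k \<in> S'"
    then have k: "k \<in> {1..n}" using S S' by auto
    have "real (w k) = real (l k) * (real (w k) / real (l k))" using lk[OF k] by simp
    also have "\<dots> \<le> real (l k) * rr" using rr_ge[OF k] by (intro mult_left_mono) auto
    finally show "real (w k) \<le> real (l k) * rr" .
  qed
  also have "\<dots> = real (\<Sum>k\<in>S'. l k) * rr" by (simp add: sum_distrib_right)
  also have "\<dots> \<le> real lbin * rr"
  proof -
    have "real (\<Sum>k\<in>S'. l k) \<le> real lbin" using S'(2) c by linarith
    then show ?thesis using rr_nonneg by (intro mult_right_mono) auto
  qed
  also have "\<dots> \<le> real W" by (rule W_ge)
  finally have "real (\<Sum>k\<in>S'. w k) \<le> real W" .
  then show ?thesis unfolding S'(3) by (simp only: of_nat_le_iff)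
qed

lemma enc_lt: "(\<And>c. c \<le> lbin \<Longrightarrow> f c < B) \<Longrightarrow> enc f < Q"
  unfolding enc_def Q_def by (rule sum_digits_lt) auto

lemma dig_enc: "(\<And>c. c \<le> lbin \<Longrightarrow> f c < B) \<Longrightarrow> c \<le> lbin \<Longrightarrow> dig (enc f) c = f c"
  unfolding enc_def dig_def by (rule sum_digits_dig) auto

lemma dig_lt: "dig x c < B" unfolding dig_def using Bpos by simp

lemma gf_lt: "gf k x c < B" unfolding gf_def B_def using dig_lt[of x c] unfolding B_def by auto

lemma G_lt: "G k x < Q" unfolding G_def by (rule enc_lt) (rule gf_lt)

lemma dig_G: "c \<le> lbin \<Longrightarrow> dig (G k x) c = gf k x c"
  unfolding G_def by (rule dig_enc) (auto intro: gf_lt)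

lemma prof_lt_B: assumes "S \<subseteq> {1..n}" "c \<le> lbin" shows "prof l w S c < B"
  using prof_le_W[OF assms] unfolding B_def by simp

lemma eS_lt: assumes "S \<subseteq> {1..n}" shows "eS S < Q"
  unfolding eS_def by (rule enc_lt) (rule prof_lt_B[OF assms])

lemma dig_eS: assumes "S \<subseteq> {1..n}" "c \<le> lbin" shows "dig (eS S) c = prof l w S c"
  unfolding eS_def by (rule dig_enc[OF prof_lt_B[OF assms(1)] assms(2)])

lemma eS_insert:
  assumes S: "S \<subseteq> {1..n}" and k: "k \<in> {1..n}" "k \<notin> S"
  shows "eS (insert k S) = G k (eS S)"
proof -
  have fin: "finite S" using S finite_subset by blast
  have S2: "insert k S \<subseteq> {1..n}" using S k by auto
  have "prof l w (insert k S) c = gf k (eS S) c" if c: "c < Suc lbin" for c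
  proof -
    have c': "c \<le> lbin" using c by simp
    have P: "prof l w (insert k S) c = max (prof l w S c) (if l k \<le> c then prof l w S (c - l k) + w k else 0)"
      by (rule prof_insert[OF fin k(2)])
    have le: "prof l w (insert k S) c \<le> W" by (rule prof_le_W[OF S2 c'])
    have d1: "dig (eS S) c = prof l w S c" by (rule dig_eS[OF S c'])
    have d2: "dig (eS S) (c - l k) = prof l w S (c - l k)" by (rule dig_eS[OF S]) (use c' in simp)
    show ?thesis
      unfolding gf_def d1 d2
      using P le c' by (auto simp: max_def min_def)
  qed
  then show ?thesis unfolding G_def eS_def[of "insert k S"] enc_def
    by (intro sum.cong) (auto simp: eS_def)
qed

lemma eS_empty: "eS {} = 0"
  unfolding eS_def enc_def prof_empty by simp

lemma cnt_empty: "cntf {} s x = (if s = 0 \<and> x = 0 then 1 else 0)"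
proof -
  have "{S. S \<subseteq> {} \<and> card S = s \<and> eS S = x} = (if s = 0 \<and> x = 0 then {{}} else {})"
    using eS_empty by auto
  then show ?thesis unfolding cntf_def by simp
qed

lemma card_group:
  fixes A :: "'a set" and g :: "'a \<Rightarrow> 'b"
  assumes "finite A" "finite X" "g ` A \<subseteq> X"
  shows "card A = (\<Sum>y\<in>X. card {a\<in>A. g a = y})"
  using sum.group[OF assms, of "\<lambda>_. (1::nat)"] by simp

lemma cnt_insert0:
  assumes "finite P" shows "cntf (insert k P) 0 x = cntf P 0 x"
proof -
  have "{S. S \<subseteq> insert k P \<and> card S = 0 \<and> eS S = x} = {S. S = {} \<and> eS S = x}"
    using assms by (auto dest: finite_subset)
  moreover have "{S. S \<subseteq> P \<and> card S = 0 \<and> eS S = x} = {S. S = {} \<and> eS S = x}"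
    using assms by (auto dest: finite_subset)
  ultimately show ?thesis unfolding cntf_def by simp
qed

lemma cnt_insert:
  assumes P: "P \<subseteq> {1..n}" and k: "k \<in> {1..n}" "k \<notin> P"
  shows "cntf (insert k P) (Suc s) y = cntf P (Suc s) y + (\<Sum>x<Q. if G k x = y then cntf P s x else 0)"
proof -
  have finP: "finite P" using P finite_subset by blast
  define A where "A = {S. S \<subseteq> P \<and> card S = Suc s \<and> eS S = y}"
  define C where "C = {S. S \<subseteq> P \<and> card S = s \<and> G k (eS S) = y}"
  have fC: "finite C" unfolding C_def using finP by (auto intro: finite_subset[of _ "Pow P"])
  have fA: "finite A" unfolding A_def using finP by (auto intro: finite_subset[of _ "Pow P"])
  have split: "{S. S \<subseteq> insert k P \<and> card S = Suc s \<and> eS S = y} = A \<union> insert k ` C"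
  proof (intro equalityI subsetI)
    fix S assume "S \<in> {S. S \<subseteq> insert k P \<and> card S = Suc s \<and> eS S = y}"
    then have S: "S \<subseteq> insert k P" "card S = Suc s" "eS S = y" by auto
    show "S \<in> A \<union> insert k ` C"
    proof (cases "k \<in> S")
      case True
      define S' where "S' = S - {k}"
      have S'P: "S' \<subseteq> P" using S(1) k(2) unfolding S'_def by auto
      have fS: "finite S" using S(1) finP finite_subset by blast
      have "card S' = s" using S(2) True fS unfolding S'_def by simp
      moreover have "G k (eS S') = y"
      proof -
        have "S = insert k S'" using True unfolding S'_def by auto
        moreover have "eS (insert k S') = G k (eS S')"
          using S'P P k(1) by (intro eS_insert) (auto simp: S'_def)
        ultimately show ?thesis using S(3) by simp
      qed
      ultimately have "S' \<in> C" using S'P unfolding C_def by auto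
      moreover have "S = insert k S'" using True unfolding S'_def by auto
      ultimately show ?thesis by blast
    next
      case False
      then show ?thesis using S unfolding A_def by auto
    qed
  next
    fix S assume "S \<in> A \<union> insert k ` C"
    then show "S \<in> {S. S \<subseteq> insert k P \<and> card S = Suc s \<and> eS S = y}"
    proof
      assume "S \<in> A" then show ?thesis unfolding A_def by auto
    next
      assume "S \<in> insert k ` C"
      then obtain S' where S': "S' \<in> C" "S = insert k S'" by auto
      have S'P: "S' \<subseteq> P" using S' unfolding C_def by auto
      have fS': "finite S'" using S'P finP finite_subset by blast
      have kS': "k \<notin> S'" using S'P k by auto
      have "eS S = y" using S' eS_insert[of S' k] S'P P k kS' unfolding C_def by auto
      moreover have "card S = Suc s" using S' fS' kS' unfolding C_def by auto
      ultimately show ?thesis using S' S'P by auto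
    qed
  qed
  have disj: "A \<inter> insert k ` C = {}" unfolding A_def using k by auto
  have inj: "inj_on (insert k) C"
  proof (rule inj_onI)
    fix X Y assume "X \<in> C" "Y \<in> C" "insert k X = insert k Y"
    moreover have "k \<notin> X" "k \<notin> Y" using \<open>X \<in> C\<close> \<open>Y \<in> C\<close> k(2) unfolding C_def by auto
    ultimately show "X = Y" by (metis Diff_insert_absorb)
  qed
  have c1: "cntf (insert k P) (Suc s) y = card A + card C"
    unfolding cntf_def split using card_Un_disjoint[OF fA _ disj] fC card_image[OF inj] by simp
  have "card C = (\<Sum>x<Q. card {S\<in>C. eS S = x})"
  proof (rule card_group[OF fC])
    show "eS ` C \<subseteq> {..<Q}" using eS_lt P unfolding C_def by auto
  qed simp
  also have "\<dots> = (\<Sum>x<Q. if G k x = y then cntf P s x else 0)"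
  proof (rule sum.cong)
    fix x assume "x \<in> {..<Q}"
    show "card {S\<in>C. eS S = x} = (if G k x = y then cntf P s x else 0)"
    proof (cases "G k x = y")
      case True
      have "{S\<in>C. eS S = x} = {S. S \<subseteq> P \<and> card S = s \<and> eS S = x}" unfolding C_def using True by auto
      then show ?thesis using True unfolding cntf_def by simp
    next
      case False
      have "{S\<in>C. eS S = x} = {}" unfolding C_def using False by auto
      then have "card {S\<in>C. eS S = x} = 0" by (simp only: card.empty)
      with False show ?thesis by simp
    qed
  qed simp
  finally show ?thesis using c1 unfolding A_def cntf_def by simp
qed

definition coefR :: "nat \<Rightarrow> real" where "coefR s = fact s * fact (n - s - 1) / fact n"

lemma shapley_cnt:
  "shapley n (knapsack_game l w lbin) i =
     (\<Sum>s<n. \<Sum>x<Q. coefR s * real (cntf ({1..n} - {i}) s x) * (real (gf i x lbin) - real (dig x lbin)))"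
proof -
  define P where "P = {1..n} - {i}"
  define F where "F = (\<lambda>(s, x). coefR s * (real (gf i x lbin) - real (dig x lbin)))"
  have P: "P \<subseteq> {1..n}" "finite P" "i \<notin> P" unfolding P_def by auto
  have summand: "coefR (card S) * (knapsack_game l w lbin (S \<union> {i}) - knapsack_game l w lbin S)
       = F (card S, eS S)" if "S \<in> Pow P" for S
  proof -
    have S: "S \<subseteq> {1..n}" "i \<notin> S" using that P by auto
    have "knapsack_game l w lbin (S \<union> {i}) = real (prof l w (insert i S) lbin)" by (simp add: knap_prof)
    also have "\<dots> = real (dig (eS (insert i S)) lbin)" using S irange by (simp add: dig_eS)
    also have "\<dots> = real (gf i (eS S) lbin)" using eS_insert[OF S(1) irange S(2)] dig_G by simp
    finally have 1: "knapsack_game l w lbin (S \<union> {i}) = real (gf i (eS S) lbin)" .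
    have 2: "knapsack_game l w lbin S = real (dig (eS S) lbin)" using S by (simp add: knap_prof dig_eS)
    show ?thesis unfolding F_def 1 2 by simp
  qed
  have "shapley n (knapsack_game l w lbin) i = (\<Sum>S\<in>Pow P. F (card S, eS S))"
    unfolding shapley_def P_def[symmetric] coefR_def[symmetric] using summand by (intro sum.cong) auto
  also have "\<dots> = (\<Sum>y\<in>{..<n} \<times> {..<Q}. \<Sum>S\<in>{S\<in>Pow P. (card S, eS S) = y}. F (card S, eS S))"
  proof (rule sum.group[symmetric])
    show "finite (Pow P)" using P by simp
    show "(\<lambda>S. (card S, eS S)) ` Pow P \<subseteq> {..<n} \<times> {..<Q}"
    proof
      fix y assume "y \<in> (\<lambda>S. (card S, eS S)) ` Pow P"
      then obtain S where S: "S \<subseteq> P" "y = (card S, eS S)" by auto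
      have "card S \<le> card P" using S(1) P(2) card_mono by blast
      moreover have "card P < n" unfolding P_def using irange by (simp add: card_Diff_singleton)
      moreover have "eS S < Q" using S(1) P(1) eS_lt by blast
      ultimately show "y \<in> {..<n} \<times> {..<Q}" using S by auto
    qed
  qed simp
  also have "\<dots> = (\<Sum>y\<in>{..<n} \<times> {..<Q}. real (cntf P (fst y) (snd y)) * F y)"
  proof (rule sum.cong)
    fix y :: "nat \<times> nat" assume "y \<in> {..<n} \<times> {..<Q}"
    have set: "{S\<in>Pow P. (card S, eS S) = y} = {S. S \<subseteq> P \<and> card S = fst y \<and> eS S = snd y}"
      by (cases y) auto
    have "(\<Sum>S\<in>{S\<in>Pow P. (card S, eS S) = y}. F (card S, eS S)) = (\<Sum>S\<in>{S. S \<subseteq> P \<and> card S = fst y \<and> eS S = snd y}. F y)"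
      unfolding set by (rule sum.cong) (auto simp: prod_eq_iff)
    then show "(\<Sum>S\<in>{S\<in>Pow P. (card S, eS S) = y}. F (card S, eS S)) = real (cntf P (fst y) (snd y)) * F y"
      unfolding cntf_def by simp
  qed simp
  also have "\<dots> = (\<Sum>(s,x)\<in>{..<n} \<times> {..<Q}. real (cntf P s x) * F (s, x))"
    by (rule sum.cong) auto
  also have "\<dots> = (\<Sum>s<n. \<Sum>x<Q. real (cntf P s x) * F (s, x))"
    by (rule sum.cartesian_product[symmetric])
  finally show ?thesis unfolding P_def[symmetric] F_def by (simp add: mult.assoc mult.left_commute)
qed

end

definition N :: "nat \<Rightarrow> rat" where "N x = of_nat x"

lemma N_add[simp]: "N a + N b = N (a + b)" unfolding N_def by simp
lemma N_mult[simp]: "N a * N b = N (a * b)" unfolding N_def by simp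
lemma N_le[simp]: "N a \<le> N b \<longleftrightarrow> a \<le> b" unfolding N_def by simp
lemma N_less[simp]: "N a < N b \<longleftrightarrow> a < b" unfolding N_def by simp
lemma N_eq[simp]: "N a = N b \<longleftrightarrow> a = b" unfolding N_def by simp
lemma N_diff[simp]: "b \<le> a \<Longrightarrow> N a - N b = N (a - b)" unfolding N_def by (simp add: of_nat_diff)
lemma N_ge0[simp]: "0 \<le> N a" unfolding N_def by simp
lemma N_div_ge0[simp]: "0 \<le> N a + N b / N c" unfolding N_def by simp
lemma addr_N[simp]: "addr (N a) = a" unfolding N_def addr_def by simp
lemma addr_Ndiv[simp]: "addr (N a + N b / N c) = a + b div c"
proof -
  have "N a + N b / N c = of_int (int a) + (of_nat b / of_nat c :: rat)" unfolding N_def by simp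
  then have "\<lfloor>N a + N b / N c\<rfloor> = int a + \<lfloor>of_nat b / of_nat c :: rat\<rfloor>" by (simp add: floor_add_int)
  then show ?thesis unfolding addr_def by (simp add: floor_divide_of_nat_eq nat_add_distrib)
qed

definition HA :: "expr \<Rightarrow> expr" where
  "HA e = Plus (Plus (Times (Const (N 2)) (Load (Const (N 0)))) (Const (N 3))) e"
definition rd :: "expr \<Rightarrow> expr" where "rd e = Load (HA e)"
definition wr :: "expr \<Rightarrow> expr \<Rightarrow> com" where "wr e v = Store (HA e) v"
definition V :: "nat \<Rightarrow> expr" where "V j = rd (Const (N j))"
definition SV :: "nat \<Rightarrow> expr \<Rightarrow> com" where "SV j v = wr (Const (N j)) v"
definition nE :: expr where "nE = Load (Const (N 0))"
definition INI :: expr where "INI = Load (Plus (Times (Const (N 2)) nE) (Const (N 2)))"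
definition INLB :: expr where "INLB = Load (Plus (Times (Const (N 2)) nE) (Const (N 1)))"
definition INW :: "expr \<Rightarrow> expr" where "INW e = Load (Plus nE e)"
definition C :: "nat \<Rightarrow> expr" where "C k = Const (N k)"

lemma ecost_HA[simp]: "ecost (HA e) = 7 + ecost e" unfolding HA_def by simp
lemma ecost_rd[simp]: "ecost (rd e) = 8 + ecost e" unfolding rd_def by simp
lemma ecost_V[simp]: "ecost (V j) = 9" unfolding V_def by simp
lemma ecost_C[simp]: "ecost (C j) = 1" unfolding C_def by simp
lemma ecost_nE[simp]: "ecost nE = 2" unfolding nE_def by simp
lemma ecost_INI[simp]: "ecost INI = 7" unfolding INI_def by simp
lemma ecost_INLB[simp]: "ecost INLB = 7" unfolding INLB_def by simp
lemma ecost_INW[simp]: "ecost (INW e) = 4 + ecost e" unfolding INW_def by simp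
lemma cst_wr[simp]: "cst (wr a e) = 8 + ecost a + ecost e" unfolding wr_def by simp
lemma cst_SV[simp]: "cst (SV j e) = 9 + ecost e" unfolding SV_def by simp
lemma lf_wr[simp]: "lf (wr a e)" unfolding wr_def by simp
lemma lf_SV[simp]: "lf (SV j e)" unfolding SV_def by simp
lemma eval_C[simp]: "eval (C k) M = N k" unfolding C_def by simp

context KS begin

definition "R = 2 * n + 3"
definition mm :: "(nat \<Rightarrow> rat) \<Rightarrow> mem" where
  "mm h = (\<lambda>r. if r < R then input_mem n l w lbin i r else h (r - R))"

lemma mm_0: "mm h 0 = N n" unfolding mm_def R_def input_mem_def N_def by simp

lemma eval_nE[simp]: "eval nE (mm h) = N n" unfolding nE_def by (simp add: mm_0)

lemma eval_HA[simp]: "eval (HA e) (mm h) = N R + eval e (mm h)"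
  unfolding HA_def by (simp add: mm_0 R_def)

lemma addr_R: "0 \<le> q \<Longrightarrow> addr (N R + q) = R + addr q"
proof -
  assume q: "0 \<le> q"
  have "\<lfloor>N R + q\<rfloor> = int R + \<lfloor>q\<rfloor>" unfolding N_def
    by (metis floor_add_int of_int_of_nat_eq add.commute)
  then show ?thesis unfolding addr_def using q by (simp add: nat_add_distrib)
qed

lemma mm_R[simp]: "mm h (R + a) = h a" unfolding mm_def by simp
lemma mm_upd[simp]: "(mm h)(R + a := v) = mm (h(a := v))"
  unfolding mm_def by (rule ext) auto

lemma eval_rd[simp]: "0 \<le> eval e (mm h) \<Longrightarrow> eval (rd e) (mm h) = h (addr (eval e (mm h)))"
  unfolding rd_def by (simp add: addr_R)
lemma run_wr[simp]: "0 \<le> eval e (mm h) \<Longrightarrow> run (wr e v) (mm h) = mm (h(addr (eval e (mm h)) := eval v (mm h)))"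
  unfolding wr_def by (simp add: addr_R)
lemma eval_V[simp]: "eval (V j) (mm h) = h j" unfolding V_def by simp
lemma run_SV[simp]: "run (SV j v) (mm h) = mm (h(j := eval v (mm h)))" unfolding SV_def by simp

lemma mm_l: "1 \<le> k \<Longrightarrow> k \<le> n \<Longrightarrow> mm h k = N (l k)"
  by (simp add: mm_def R_def input_mem_def N_def)
lemma mm_w: "1 \<le> k \<Longrightarrow> k \<le> n \<Longrightarrow> mm h (n + k) = N (w k)"
  by (simp add: mm_def R_def input_mem_def N_def)
lemma mm_lb: "mm h (2 * n + 1) = N lbin"
  using npos by (simp add: mm_def R_def input_mem_def N_def)
lemma mm_i: "mm h (2 * n + 2) = N i"
  by (simp add: mm_def R_def input_mem_def N_def)

lemma eval_INI[simp]: "eval INI (mm h) = N i"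
  unfolding INI_def using mm_i[of h] by simp
lemma eval_INLB[simp]: "eval INLB (mm h) = N lbin"
  unfolding INLB_def using mm_lb[of h] by simp
lemma eval_INL: "eval e (mm h) = N k \<Longrightarrow> 1 \<le> k \<Longrightarrow> k \<le> n \<Longrightarrow> eval (Load e) (mm h) = N (l k)"
  by (simp add: mm_l)
lemma eval_INW: "eval e (mm h) = N k \<Longrightarrow> 1 \<le> k \<Longrightarrow> k \<le> n \<Longrightarrow> eval (INW e) (mm h) = N (w k)"
  unfolding INW_def by (simp add: mm_w)

lemma mm_init: "input_mem n l w lbin i = mm (\<lambda>_. 0)"
  unfolding mm_def R_def input_mem_def by (rule ext) auto

end

lemma spec_Seq_lf: "lf c1 \<Longrightarrow> spec c2 (run c1 M) b2 Q \<Longrightarrow> cst c1 + b2 \<le> b \<Longrightarrow> spec (Seq c1 c2) M b Q"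
  by (rule spec_Seq[of c1 M "cst c1" _ b2]) (auto intro: spec_lf)

lemma run_if[simp]: "run c (if P then M1 else M2) = (if P then run c M1 else run c M2)" by simp

definition CBODY :: com where
 "CBODY = Seq (SV 9 (Times (V 5) (V 13)))
 (Seq (SV 7 (Minus (rd (Plus (C 24) (Divide (V 2) (V 5)))) (Times (V 13) (rd (Plus (C 24) (Divide (V 2) (V 9)))))))
 (Seq (SV 8 (V 7))
 (Seq (If (Le (V 10) (V 3))
        (Seq (SV 9 (Times (V 6) (V 13)))
        (Seq (SV 9 (Plus (Minus (rd (Plus (C 24) (Divide (V 2) (V 6)))) (Times (V 13) (rd (Plus (C 24) (Divide (V 2) (V 9)))))) (V 11)))
        (Seq (If (Le (V 8) (V 9)) (SV 8 (V 9)) Skip)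
        (Seq (If (Le (V 12) (V 8)) (SV 8 (V 12)) Skip)
             (SV 6 (Times (V 6) (V 13)))))))
        Skip)
 (Seq (SV 4 (Plus (V 4) (Times (V 8) (V 5))))
 (Seq (SV 5 (Times (V 5) (V 13)))
      (SV 3 (Plus (V 3) (C 1))))))))"

definition CINIT :: com where
 "CINIT = Seq (SV 3 (C 0)) (Seq (SV 4 (C 0)) (Seq (SV 5 (C 1)) (SV 6 (C 1))))"

definition CGUARD :: bexp where "CGUARD = Le (V 3) (V 18)"

definition CLOOP :: com where "CLOOP = Seq CINIT (While CGUARD CBODY)"

lemma lf_CBODY: "lf CBODY" unfolding CBODY_def by simp
lemma lf_CINIT: "lf CINIT" unfolding CINIT_def by simp
lemma cst_CBODY: "cst CBODY \<le> 500" unfolding CBODY_def by simp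
lemma cst_CINIT: "cst CINIT \<le> 50" unfolding CINIT_def by simp
lemma bcost_CGUARD: "bcost CGUARD = 19" unfolding CGUARD_def by simp

fun hwc :: "com \<Rightarrow> bool" where
  "hwc Skip = True" | "hwc (Seq c1 c2) = (hwc c1 \<and> hwc c2)" | "hwc (If b c1 c2) = (hwc c1 \<and> hwc c2)"
| "hwc (Store a e) = (\<exists>j. a = HA (Const (N j)))" | "hwc (While b c) = False"

lemma hwc_SV[simp]: "hwc (SV j v)" unfolding SV_def wr_def by auto
lemma hwc_CBODY: "hwc CBODY" unfolding CBODY_def by simp

context KS begin

lemma hwc_run: "hwc c \<Longrightarrow> \<exists>h'. run c (mm h) = mm h'"
proof (induction c arbitrary: h)
  case (Store a e)
  then obtain j where "a = HA (Const (N j))" by auto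
  then show ?case by (auto simp add: addr_R)
next
  case (Seq c1 c2)
  then obtain h1 where "run c1 (mm h) = mm h1" by auto
  with Seq show ?case by auto
qed auto

definition hof :: "mem \<Rightarrow> (nat \<Rightarrow> rat)" where "hof M = (\<lambda>a. M (R + a))"
lemma hof_mm[simp]: "hof (mm h) = h" unfolding hof_def by simp

definition "CB = 24 + Q"

definition Inv0 :: "(nat \<Rightarrow> rat) \<Rightarrow> bool" where
  "Inv0 h \<longleftrightarrow> h 18 = N lbin \<and> h 12 = N W \<and> h 13 = N B \<and> h 14 = N Q \<and> h 19 = N CB \<and> (\<forall>z<Q. h (24 + z) = N z)"

definition gfp :: "nat \<Rightarrow> nat \<Rightarrow> nat \<Rightarrow> nat \<Rightarrow> nat" where
  "gfp lk wk x c = (if c < lk then dig x c else min W (max (dig x c) (dig x (c - lk) + wk)))"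

lemma gf_gfp: "gf k = gfp (l k) (w k)" unfolding gf_def gfp_def by (intro ext) simp

lemma digit1[simp]: "N (x div p) - N (B * (x div (p * B))) = N (x div p mod B)"
proof -
  have "x div (p * B) = x div p div B" by (simp add: div_mult2_eq)
  then have "B * (x div (p * B)) \<le> x div p" by simp
  moreover have "x div p - B * (x div (p * B)) = x div p mod B"
    using \<open>x div (p * B) = x div p div B\<close> by (simp add: minus_div_mult_eq_mod[symmetric] mult.commute)
  ultimately show ?thesis by simp
qed

lemma digit2[simp]: "x div p - B * (x div (p * B)) = x div p mod B"
  by (simp add: div_mult2_eq minus_div_mult_eq_mod[symmetric] mult.commute)

definition CI :: "(nat \<Rightarrow> rat) \<Rightarrow> nat \<Rightarrow> nat \<Rightarrow> nat \<Rightarrow> nat \<Rightarrow> (nat \<Rightarrow> rat) \<Rightarrow> bool" where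
  "CI h x lk wk j h' \<longleftrightarrow> (\<forall>a. a \<notin> {3..9} \<longrightarrow> h' a = h a) \<and> h' 3 = N j \<and>
     h' 4 = N (\<Sum>c<j. gfp lk wk x c * B ^ c) \<and> h' 5 = N (B ^ j) \<and> h' 6 = N (B ^ (j - lk)) \<and>
     (0 < j \<longrightarrow> h' 7 = N (dig x (j - 1)) \<and> h' 8 = N (gfp lk wk x (j - 1)))"

lemma CBODY_step:
  assumes I0: "Inv0 h" "h 2 = N x" "x < Q" "h 10 = N lk" "h 11 = N wk"
    and ci: "CI h x lk wk j h'"
  shows "CI h x lk wk (Suc j) (hof (run CBODY (mm h')))"
proof -
  have fr: "\<And>a. a \<notin> {3..9} \<Longrightarrow> h' a = h a" using ci unfolding CI_def by auto
  have v: "h' 18 = N lbin" "h' 12 = N W" "h' 13 = N B" "h' 14 = N Q" "h' 2 = N x" "h' 10 = N lk" "h' 11 = N wk"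
    using I0 fr unfolding Inv0_def by auto
  have tab: "\<And>p. h' (24 + x div p) = N (x div p)"
  proof -
    fix p
    have "x div p < Q" using I0(3) by (meson div_le_dividend le_less_trans)
    then show "h' (24 + x div p) = N (x div p)" using I0(1) fr[of "24 + x div p"] unfolding Inv0_def by auto
  qed
  have c: "h' 3 = N j" "h' 4 = N (\<Sum>c<j. gfp lk wk x c * B ^ c)" "h' 5 = N (B ^ j)" "h' 6 = N (B ^ (j - lk))"
    using ci unfolding CI_def by auto
  show ?thesis
    unfolding CBODY_def CI_def
    using fr v tab c
    using Bpos by (simp add: dig_def) (simp add: gfp_def dig_def Suc_diff_le min_def max_def)
qed

lemma hwc_mm: "hwc c \<Longrightarrow> run c (mm h) = mm (hof (run c (mm h)))"
  using hwc_run[of c h] by auto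

definition "bC = 600 * (lbin + 2)"

lemma CLOOP_spec:
  assumes I0: "Inv0 h" "h 2 = N x" "x < Q" "h 10 = N lk" "h 11 = N wk"
  shows "spec CLOOP (mm h) bC (\<lambda>M'. M' = mm (hof M') \<and> (\<forall>a. a \<notin> {3..9} \<longrightarrow> hof M' a = h a) \<and>
     hof M' 4 = N (enc (gfp lk wk x)) \<and> hof M' 7 = N (dig x lbin) \<and> hof M' 8 = N (gfp lk wk x lbin))"
  unfolding CLOOP_def
proof (rule spec_Seq_lf[OF lf_CINIT])
  define I where "I = (\<lambda>j M. M = mm (hof M) \<and> CI h x lk wk j (hof M))"
  have v: "h 18 = N lbin" using I0 unfolding Inv0_def by auto
  show "spec (While CGUARD CBODY) (run CINIT (mm h)) (550 * (lbin + 2))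
     (\<lambda>M'. M' = mm (hof M') \<and> (\<forall>a. a \<notin> {3..9} \<longrightarrow> hof M' a = h a) \<and>
     hof M' 4 = N (enc (gfp lk wk x)) \<and> hof M' 7 = N (dig x lbin) \<and> hof M' 8 = N (gfp lk wk x lbin))"
  proof (rule spec_While[where I = I and m = "Suc lbin" and B = 500])
    show "I 0 (run CINIT (mm h))" unfolding I_def CINIT_def CI_def by simp
  next
    fix j M assume j: "j < Suc lbin" and IM: "I j M"
    then have M: "M = mm (hof M)" and ci: "CI h x lk wk j (hof M)" unfolding I_def by auto
    have "hof M 18 = N lbin" "hof M 3 = N j" using ci v unfolding CI_def by auto
    then have "beval CGUARD (mm (hof M))" using j unfolding CGUARD_def by simp
    then have g: "beval CGUARD M" using M by metis
    have "spec CBODY (mm (hof M)) 500 (I (Suc j))"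
    proof (rule spec_lf[OF lf_CBODY])
      show "I (Suc j) (run CBODY (mm (hof M)))"
        unfolding I_def by (intro conjI hwc_mm[OF hwc_CBODY] CBODY_step[OF I0 ci])
    qed (rule cst_CBODY)
    then show "beval CGUARD M \<and> spec CBODY M 500 (I (Suc j))" using g M by metis
  next
    fix M assume "I (Suc lbin) M"
    then have M: "M = mm (hof M)" and ci: "CI h x lk wk (Suc lbin) (hof M)" unfolding I_def by auto
    have "hof M 18 = N lbin" "hof M 3 = N (Suc lbin)" using ci v unfolding CI_def by auto
    then have "\<not> beval CGUARD (mm (hof M))" unfolding CGUARD_def by simp
    then have g: "\<not> beval CGUARD M" using M by metis
    show "\<not> beval CGUARD M \<and> (M = mm (hof M) \<and> (\<forall>a. a \<notin> {3..9} \<longrightarrow> hof M a = h a) \<and>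
     hof M 4 = N (enc (gfp lk wk x)) \<and> hof M 7 = N (dig x lbin) \<and> hof M 8 = N (gfp lk wk x lbin))"
      using g M ci unfolding CI_def enc_def by auto
  qed (simp add: bcost_CGUARD)
qed (use cst_CINIT in \<open>simp add: bC_def\<close>)

end

definition CELLY :: expr where "CELLY = Plus (Plus (V 19) (Times (V 1) (V 14))) (V 4)"
definition CELLX :: expr where "CELLX = Plus (Plus (V 19) (Times (Minus (V 1) (C 1)) (V 14))) (V 2)"
definition XREST :: com where "XREST = Seq (wr CELLY (Plus (rd CELLY) (rd CELLX))) (SV 2 (Plus (V 2) (C 1)))"
definition XBODY :: com where "XBODY = Seq CLOOP XREST"
definition XG :: bexp where "XG = Not (Le (V 14) (V 2))"
definition XLOOP :: com where "XLOOP = Seq (SV 2 (C 0)) (While XG XBODY)"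

lemma lf_XREST: "lf XREST" unfolding XREST_def by simp
lemma cst_XREST: "cst XREST \<le> 200" unfolding XREST_def CELLY_def CELLX_def by simp
lemma bcost_XG: "bcost XG = 20" unfolding XG_def by simp

lemma loop_bound: "m \<le> M \<Longrightarrow> 1 + bc + B \<le> Y \<Longrightarrow> m * (1 + bc + B) + 1 + bc \<le> Suc M * Y"
proof -
  assume a: "m \<le> M" "1 + bc + B \<le> Y"
  have "m * (1 + bc + B) \<le> M * Y" using a by (intro mult_mono) auto
  then show ?thesis using a by simp
qed

context KS begin

definition cells :: "(nat \<Rightarrow> rat) \<Rightarrow> (nat \<Rightarrow> nat \<Rightarrow> nat) \<Rightarrow> bool" where
  "cells h F \<longleftrightarrow> (\<forall>t\<le>n. \<forall>y<Q. h (CB + t * Q + y) = N (F t y))"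

lemma cell_inj: "y < Q \<Longrightarrow> y' < Q \<Longrightarrow> CB + t * Q + y = CB + t' * Q + y' \<longleftrightarrow> t = t' \<and> y = y'"
proof
  assume y: "y < Q" "y' < Q" and e: "CB + t * Q + y = CB + t' * Q + y'"
  then have e2: "t * Q + y = t' * Q + y'" by simp
  then have "(t * Q + y) div Q = (t' * Q + y') div Q" by simp
  then have "t = t'" using y by simp
  then show "t = t' \<and> y = y'" using e2 by simp
qed simp

lemma cell_big: "24 + Q \<le> CB + t * Q + y" unfolding CB_def by simp

definition lvl :: "nat \<Rightarrow> nat set \<Rightarrow> nat \<Rightarrow> nat \<Rightarrow> nat \<Rightarrow> nat \<Rightarrow> nat" where
  "lvl k P t j t' y = (if t < t' then cntf (insert k P) t' y
     else if t' = t then cntf P t y + (\<Sum>x<j. if G k x = y then cntf P (t - 1) x else 0) else cntf P t' y)"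

definition XI :: "nat \<Rightarrow> nat set \<Rightarrow> nat \<Rightarrow> nat \<Rightarrow> (nat \<Rightarrow> rat) \<Rightarrow> bool" where
  "XI k P t j h \<longleftrightarrow> Inv0 h \<and> h 0 = N k \<and> h 10 = N (l k) \<and> h 11 = N (w k) \<and> h 1 = N t \<and> h 2 = N j \<and>
     cells h (lvl k P t j)"

lemma XREST_run:
  assumes "h1 1 = N t" "1 \<le> t" "h1 14 = N Q" "h1 19 = N CB" "h1 4 = N y" "h1 2 = N j"
  shows "run XREST (mm h1) = mm (h1(CB + t * Q + y := h1 (CB + t * Q + y) + h1 (CB + (t - 1) * Q + j), 2 := N (Suc j)))"
  using assms unfolding XREST_def CELLY_def CELLX_def CB_def by simp

lemma spec_CLOOP_then:
  assumes I0: "Inv0 h" "h 2 = N x" "x < Q" "h 10 = N lk" "h 11 = N wk"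
    and post: "\<And>h1. (\<forall>a. a \<notin> {3..9} \<longrightarrow> h1 a = h a) \<Longrightarrow> h1 4 = N (enc (gfp lk wk x)) \<Longrightarrow>
        h1 7 = N (dig x lbin) \<Longrightarrow> h1 8 = N (gfp lk wk x lbin) \<Longrightarrow> Qp (run REST (mm h1))"
    and lfR: "lf REST" and cR: "cst REST \<le> b2"
  shows "spec (Seq CLOOP REST) (mm h) (bC + b2) Qp"
proof (rule spec_Seq[OF spec_mono[OF CLOOP_spec[OF I0]]])
  fix M assume M: "M = mm (hof M) \<and> (\<forall>a. a \<notin> {3..9} \<longrightarrow> hof M a = h a) \<and>
     hof M 4 = N (enc (gfp lk wk x)) \<and> hof M 7 = N (dig x lbin) \<and> hof M 8 = N (gfp lk wk x lbin)"
  then have "Qp (run REST (mm (hof M)))" using post by blast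
  then have "spec REST (mm (hof M)) b2 Qp" by (rule spec_lf[OF lfR _ cR])
  then show "spec REST M b2 Qp" using M by metis
qed auto

lemma XI_step:
  assumes xi: "XI k P t j h" and t: "1 \<le> t" "t \<le> n" and j: "j < Q"
    and fr: "\<forall>a. a \<notin> {3..9} \<longrightarrow> h1 a = h a"
  shows "XI k P t (Suc j) (h1(CB + t * Q + G k j := h1 (CB + t * Q + G k j) + h1 (CB + (t - 1) * Q + j), 2 := N (Suc j)))"
proof -
  define c where "c = CB + t * Q + G k j"
  define h2 where "h2 = h1(c := h1 c + h1 (CB + (t - 1) * Q + j), 2 := N (Suc j))"
  have GQ: "G k j < Q" by (rule G_lt)
  have cbig: "\<And>t y. 24 + Q \<le> CB + t * Q + y" by (rule cell_big)
  have frc: "\<And>t y. h1 (CB + t * Q + y) = h (CB + t * Q + y)"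
  proof -
    fix t y
    have "CB + t * Q + y \<notin> {3..9}" using cbig[of t y] by auto
    then show "h1 (CB + t * Q + y) = h (CB + t * Q + y)" using fr by blast
  qed
  have cl: "cells h (lvl k P t j)" using xi unfolding XI_def by simp
  have hc: "h1 c = N (lvl k P t j t (G k j))" unfolding c_def frc using cl GQ t unfolding cells_def by auto
  have hx: "h1 (CB + (t - 1) * Q + j) = N (cntf P (t - 1) j)"
    unfolding frc using cl j t unfolding cells_def lvl_def by auto
  have i0: "Inv0 h" using xi unfolding XI_def by simp
  have small: "\<And>a. a < 24 + Q \<Longrightarrow> h2 a = (if a = 2 then N (Suc j) else h1 a)"
    unfolding h2_def c_def using cbig[of t "G k j"] by auto
  have "Inv0 h2"
  proof -
    have "\<forall>z<Q. h2 (24 + z) = N z" using i0 small fr unfolding Inv0_def by auto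
    moreover have "h2 18 = N lbin \<and> h2 12 = N W \<and> h2 13 = N B \<and> h2 14 = N Q \<and> h2 19 = N CB"
      using i0 small fr unfolding Inv0_def by auto
    ultimately show ?thesis unfolding Inv0_def by auto
  qed
  moreover have "h2 0 = N k \<and> h2 10 = N (l k) \<and> h2 11 = N (w k) \<and> h2 1 = N t \<and> h2 2 = N (Suc j)"
    using xi small fr unfolding XI_def by auto
  moreover have "cells h2 (lvl k P t (Suc j))"
    unfolding cells_def
  proof (intro allI impI)
    fix t' y assume t': "t' \<le> n" and y: "y < Q"
    have ne2: "CB + t' * Q + y \<noteq> 2" using cbig[of t' y] by auto
    show "h2 (CB + t' * Q + y) = N (lvl k P t (Suc j) t' y)"
    proof (cases "t' = t \<and> y = G k j")
      case True
      then have "h2 (CB + t' * Q + y) = h1 c + h1 (CB + (t - 1) * Q + j)" unfolding h2_def c_def using ne2 by simp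
      also have "\<dots> = N (lvl k P t (Suc j) t' y)" unfolding hc hx using True t by (simp add: lvl_def)
      finally show ?thesis .
    next
      case False
      then have "CB + t' * Q + y \<noteq> c" unfolding c_def using cell_inj[OF y GQ] by auto
      then have "h2 (CB + t' * Q + y) = h (CB + t' * Q + y)" unfolding h2_def using ne2 frc by simp
      also have "\<dots> = N (lvl k P t j t' y)" using cl t' y unfolding cells_def by auto
      also have "lvl k P t j t' y = lvl k P t (Suc j) t' y" using False unfolding lvl_def by auto
      finally show ?thesis .
    qed
  qed
  ultimately show ?thesis unfolding XI_def h2_def c_def by blast
qed

end

definition LG :: bexp where "LG = Le (C 1) (V 1)"
definition LBODY :: com where "LBODY = Seq XLOOP (SV 1 (Minus (V 1) (C 1)))"
definition LLOOP :: com where "LLOOP = Seq (SV 1 nE) (While LG LBODY)"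
definition AG :: bexp where "AG = And (Le (V 0) INI) (Le INI (V 0))"
definition ABODY :: com where
  "ABODY = Seq (If AG Skip (Seq (SV 10 (Load (V 0))) (Seq (SV 11 (INW (V 0))) LLOOP))) (SV 0 (Plus (V 0) (C 1)))"
definition AGG :: bexp where "AGG = Le (V 0) nE"
definition ALOOP :: com where "ALOOP = Seq (SV 0 (C 1)) (While AGG ABODY)"

context KS begin

definition st :: "((nat \<Rightarrow> rat) \<Rightarrow> bool) \<Rightarrow> mem \<Rightarrow> bool" where
  "st P M \<longleftrightarrow> M = mm (hof M) \<and> P (hof M)"

lemma st_mm[simp]: "st P (mm h) \<longleftrightarrow> P h" unfolding st_def by simp

lemma spec_While_st:
  assumes "P 0 h0"
    and step: "\<And>j h. j < m \<Longrightarrow> P j h \<Longrightarrow> beval bb (mm h) \<and> spec c (mm h) Bd (st (P (Suc j)))"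
    and fin: "\<And>h. P m h \<Longrightarrow> \<not> beval bb (mm h) \<and> Qp h"
    and "m * (1 + bcost bb + Bd) + 1 + bcost bb \<le> b"
  shows "spec (While bb c) (mm h0) b (st Qp)"
proof (rule spec_While[where I = "\<lambda>j. st (P j)" and m = m and B = Bd])
  show "st (P 0) (mm h0)" using assms(1) by simp
next
  fix j M assume "j < m" "st (P j) M"
  then have M: "M = mm (hof M)" "P j (hof M)" unfolding st_def by auto
  from step[OF \<open>j < m\<close> M(2)] show "beval bb M \<and> spec c M Bd (st (P (Suc j)))" using M(1) by metis
next
  fix M assume "st (P m) M"
  then have M: "M = mm (hof M)" "P m (hof M)" unfolding st_def by auto
  from fin[OF M(2)] show "\<not> beval bb M \<and> st Qp M" using M(1) unfolding st_def by metis
qed (use assms(4) in simp)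

lemma spec_st_mono: assumes "spec c M b (st P)" "b \<le> b'" "\<And>h. P h \<Longrightarrow> P' h" shows "spec c M b' (st P')"
  by (rule spec_mono[OF assms(1,2)]) (use assms(3) in \<open>auto simp: st_def\<close>)

lemma spec_Seq_st:
  assumes a1: "spec c1 M b1 (st P)" and a2: "\<And>h. P h \<Longrightarrow> spec c2 (mm h) b2 Qp" and a3: "b1 + b2 \<le> b"
  shows "spec (Seq c1 c2) M b Qp"
proof (rule spec_Seq[OF spec_mono[OF a1 order_refl] a3])
  fix M1 assume "st P M1"
  then have "M1 = mm (hof M1)" "P (hof M1)" unfolding st_def by auto
  then show "spec c2 M1 b2 Qp" using a2 by metis
qed

definition "X1 = lbin + 2"
definition "X2 = Suc Q * X1"
definition "X3 = Suc n * X2"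
definition "X4 = Suc n * X3"
lemma X_ge: "3 \<le> X1" "X1 \<le> X2" "X2 \<le> X3" "X3 \<le> X4"
  using lbin_pos unfolding X1_def X2_def X3_def X4_def by auto

lemma Inv0_upd: "a < 24 \<Longrightarrow> a \<notin> {12, 13, 14, 18, 19} \<Longrightarrow> Inv0 h \<Longrightarrow> Inv0 (h(a := v))"
  unfolding Inv0_def by auto
lemma cells_upd: "a < 24 \<Longrightarrow> cells h F \<Longrightarrow> cells (h(a := v)) F"
  unfolding cells_def using cell_big by (metis fun_upd_other le_add1 le_trans not_le)
lemma cells_cong: "(\<And>t y. t \<le> n \<Longrightarrow> y < Q \<Longrightarrow> F t y = F' t y) \<Longrightarrow> cells h F \<Longrightarrow> cells h F'"
  unfolding cells_def by auto

lemma XBODY_spec: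
  assumes xi: "XI k P t j h" and t: "1 \<le> t" "t \<le> n" and j: "j < Q"
  shows "spec XBODY (mm h) (bC + 200) (st (XI k P t (Suc j)))"
proof -
  have I0: "Inv0 h" "h 2 = N j" "h 10 = N (l k)" "h 11 = N (w k)" "h 1 = N t"
    using xi unfolding XI_def by auto
  have v: "h 14 = N Q" "h 19 = N CB" using I0(1) unfolding Inv0_def by auto
  show ?thesis unfolding XBODY_def
  proof (rule spec_CLOOP_then[OF I0(1,2) j I0(3,4) _ lf_XREST cst_XREST])
    fix h1 assume fr: "\<forall>a. a \<notin> {3..9} \<longrightarrow> h1 a = h a" and h4: "h1 4 = N (enc (gfp (l k) (w k) j))"
    have "h1 4 = N (G k j)" using h4 unfolding G_def gf_gfp .
    moreover have "h1 1 = N t" "h1 14 = N Q" "h1 19 = N CB" "h1 2 = N j" using fr I0 v by auto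
    ultimately have "run XREST (mm h1) = mm (h1(CB + t * Q + G k j := h1 (CB + t * Q + G k j) + h1 (CB + (t - 1) * Q + j), 2 := N (Suc j)))"
      using t by (intro XREST_run) auto
    then show "st (XI k P t (Suc j)) (run XREST (mm h1))" using XI_step[OF xi t j fr] by simp
  qed
qed

definition XPre :: "nat \<Rightarrow> nat set \<Rightarrow> nat \<Rightarrow> (nat \<Rightarrow> rat) \<Rightarrow> bool" where
  "XPre k P t h \<longleftrightarrow> Inv0 h \<and> h 0 = N k \<and> h 10 = N (l k) \<and> h 11 = N (w k) \<and> h 1 = N t \<and> cells h (lvl k P t 0)"

lemma XLOOP_spec:
  assumes pre: "XPre k P t h" and t: "1 \<le> t" "t \<le> n"
  shows "spec XLOOP (mm h) (800 * X2) (st (XI k P t Q))"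
  unfolding XLOOP_def
proof (rule spec_Seq_lf)
  have "XI k P t 0 (h(2 := N 0))" using pre unfolding XPre_def XI_def
    by (auto intro: Inv0_upd cells_upd)
  moreover have "run (SV 2 (C 0)) (mm h) = mm (h(2 := N 0))" by simp
  moreover have "spec (While XG XBODY) (mm (h(2 := N 0))) (790 * X2) (st (XI k P t Q))"
  proof (rule spec_While_st[where P = "XI k P t" and m = Q and Bd = "bC + 200"])
    show "XI k P t 0 (h(2 := N 0))" by fact
  next
    fix j h' assume j: "j < Q" and xi: "XI k P t j h'"
    have "beval XG (mm h')" using xi j unfolding XI_def Inv0_def XG_def by simp
    then show "beval XG (mm h') \<and> spec XBODY (mm h') (bC + 200) (st (XI k P t (Suc j)))"
      using XBODY_spec[OF xi t j] by simp
  next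
    fix h' assume "XI k P t Q h'"
    then show "\<not> beval XG (mm h') \<and> XI k P t Q h'" unfolding XI_def Inv0_def XG_def by simp
  next
    have "Q * (1 + bcost XG + (bC + 200)) + 1 + bcost XG \<le> Suc Q * (700 * X1)"
      using X_ge unfolding bcost_XG bC_def X1_def by (intro loop_bound) auto
    then show "Q * (1 + bcost XG + (bC + 200)) + 1 + bcost XG \<le> 790 * X2"
      unfolding X2_def by simp
  qed
  ultimately show "spec (While XG XBODY) (run (SV 2 (C 0)) (mm h)) (790 * X2) (st (XI k P t Q))" by simp
qed (use X_ge in auto)

end

lemma bcost_LG: "bcost LG = 11" unfolding LG_def by simp
lemma bcost_AG: "bcost AG = 35" unfolding AG_def by simp
lemma bcost_AGG: "bcost AGG = 12" unfolding AGG_def by simp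

context KS begin

definition LI :: "nat \<Rightarrow> nat set \<Rightarrow> nat \<Rightarrow> (nat \<Rightarrow> rat) \<Rightarrow> bool" where
  "LI k P j h \<longleftrightarrow> Inv0 h \<and> h 0 = N k \<and> h 10 = N (l k) \<and> h 11 = N (w k) \<and> h 1 = N (n - j) \<and>
     cells h (\<lambda>t' y. if n - j < t' then cntf (insert k P) t' y else cntf P t' y)"

lemma lvl_fin:
  assumes P: "P \<subseteq> {1..n}" and k: "k \<in> {1..n}" "k \<notin> P" and j: "j < n" and t'': "t' \<le> n"
  shows "lvl k P (n - j) Q t' y = (if n - Suc j < t' then cntf (insert k P) t' y else cntf P t' y)"
proof -
  have t1: "n - j = Suc (n - Suc j)" using j by auto
  show ?thesis
  proof (cases "n - j < t'")
    case True then show ?thesis unfolding lvl_def by auto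
  next
    case False
    show ?thesis
    proof (cases "t' = n - j")
      case True
      have e: "n - j - 1 = n - Suc j" by simp
      have c: "cntf (insert k P) (n - j) y = cntf P (n - j) y + (\<Sum>x<Q. if G k x = y then cntf P (n - j - 1) x else 0)"
        unfolding t1 diff_Suc_1 by (rule cnt_insert[OF P k])
      have "lvl k P (n - j) Q t' y = cntf P (n - j) y + (\<Sum>x<Q. if G k x = y then cntf P (n - j - 1) x else 0)"
        unfolding lvl_def using True by simp
      also have "\<dots> = cntf (insert k P) t' y" using c True by simp
      finally show ?thesis using True j by auto
    next
      case False
      then show ?thesis unfolding lvl_def using \<open>\<not> n - j < t'\<close> t1 by auto
    qed
  qed
qed

lemma LLOOP_spec:
  assumes h: "Inv0 h" "h 0 = N k" "h 10 = N (l k)" "h 11 = N (w k)" "cells h (cntf P)"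
    and P: "P \<subseteq> {1..n}" and k: "k \<in> {1..n}" "k \<notin> P"
  shows "spec LLOOP (mm h) (1000 * X3) (st (\<lambda>h'. Inv0 h' \<and> h' 0 = N k \<and> cells h' (cntf (insert k P))))"
  unfolding LLOOP_def
proof (rule spec_Seq_lf)
  have finP: "finite P" using P finite_subset by blast
  have "cells h (\<lambda>t' y. if n - 0 < t' then cntf (insert k P) t' y else cntf P t' y)"
    by (rule cells_cong[OF _ h(5)]) auto
  then have "LI k P 0 (h(1 := N n))" unfolding LI_def using h
    by (auto intro!: Inv0_upd cells_upd)
  moreover have "run (SV 1 nE) (mm h) = mm (h(1 := N n))" by simp
  moreover have "spec (While LG LBODY) (mm (h(1 := N n))) (990 * X3)
      (st (\<lambda>h'. Inv0 h' \<and> h' 0 = N k \<and> cells h' (cntf (insert k P))))"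
  proof (rule spec_While_st[where P = "LI k P" and m = n and Bd = "800 * X2 + 20"])
    show "LI k P 0 (h(1 := N n))" by fact
  next
    fix j h' assume j: "j < n" and li: "LI k P j h'"
    have t: "1 \<le> n - j" "n - j \<le> n" using j by auto
    have g: "beval LG (mm h')" using li t unfolding LI_def LG_def by simp
    have cl: "cells h' (\<lambda>t' y. if n - j < t' then cntf (insert k P) t' y else cntf P t' y)"
      using li unfolding LI_def by simp
    have "cells h' (lvl k P (n - j) 0)" by (rule cells_cong[OF _ cl]) (simp add: lvl_def)
    then have xp: "XPre k P (n - j) h'" using li unfolding LI_def XPre_def by simp
    have "spec LBODY (mm h') (800 * X2 + 20) (st (LI k P (Suc j)))"
      unfolding LBODY_def
    proof (rule spec_Seq_st[OF XLOOP_spec[OF xp t]])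
      fix h'' assume xi: "XI k P (n - j) Q h''"
      have "run (SV 1 (Minus (V 1) (C 1))) (mm h'') = mm (h''(1 := N (n - j - 1)))"
        using xi t unfolding XI_def by simp
      moreover have "LI k P (Suc j) (h''(1 := N (n - j - 1)))"
      proof -
        have "cells h'' (lvl k P (n - j) Q)" using xi unfolding XI_def by simp
        then have "cells h'' (\<lambda>t' y. if n - Suc j < t' then cntf (insert k P) t' y else cntf P t' y)"
          by (rule cells_cong[rotated]) (rule lvl_fin[OF P k j])
        then have c2: "cells (h''(1 := N (n - j - 1))) (\<lambda>t' y. if n - Suc j < t' then cntf (insert k P) t' y else cntf P t' y)"
          by (rule cells_upd[rotated]) simp
        have i2: "Inv0 (h''(1 := N (n - j - 1)))" using xi unfolding XI_def by (intro Inv0_upd) auto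
        have e: "n - j - 1 = n - Suc j" by simp
        show ?thesis using xi c2 i2 unfolding LI_def XI_def e by simp
      qed
      ultimately show "spec (SV 1 (Minus (V 1) (C 1))) (mm h'') 20 (st (LI k P (Suc j)))"
        by (intro spec_lf) auto
    qed simp
    then show "beval LG (mm h') \<and> spec LBODY (mm h') (800 * X2 + 20) (st (LI k P (Suc j)))" using g by simp
  next
    fix h' assume li: "LI k P n h'"
    have cl: "cells h' (\<lambda>t' y. if n - n < t' then cntf (insert k P) t' y else cntf P t' y)"
      using li unfolding LI_def by simp
    have "cells h' (cntf (insert k P))"
      by (rule cells_cong[OF _ cl]) (simp add: cnt_insert0[OF finP])
    then show "\<not> beval LG (mm h') \<and> Inv0 h' \<and> h' 0 = N k \<and> cells h' (cntf (insert k P))"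
      using li unfolding LI_def LG_def by simp
  next
    have "n * (1 + bcost LG + (800 * X2 + 20)) + 1 + bcost LG \<le> Suc n * (900 * X2)"
      using X_ge unfolding bcost_LG by (intro loop_bound) auto
    then show "n * (1 + bcost LG + (800 * X2 + 20)) + 1 + bcost LG \<le> 990 * X3"
      unfolding X3_def by simp
  qed
  ultimately show "spec (While LG LBODY) (run (SV 1 nE) (mm h)) (990 * X3)
      (st (\<lambda>h'. Inv0 h' \<and> h' 0 = N k \<and> cells h' (cntf (insert k P))))" by simp
qed (use X_ge in auto)

end

context KS begin

definition AI :: "nat \<Rightarrow> (nat \<Rightarrow> rat) \<Rightarrow> bool" where
  "AI j h \<longleftrightarrow> Inv0 h \<and> h 0 = N (Suc j) \<and> cells h (cntf ({1..<Suc j} - {i}))"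

lemma ABODY_spec:
  assumes ai: "AI j h" and j: "j < n"
  shows "spec ABODY (mm h) (1100 * X3) (st (AI (Suc j)))"
proof -
  define k where "k = Suc j"
  have k: "k \<in> {1..n}" using j unfolding k_def by auto
  have h: "Inv0 h" "h 0 = N k" "cells h (cntf ({1..<k} - {i}))" using ai unfolding AI_def k_def by auto
  have if_spec: "spec (If AG Skip (Seq (SV 10 (Load (V 0))) (Seq (SV 11 (INW (V 0))) LLOOP))) (mm h)
     (1 + 35 + (41 + 1000 * X3)) (st (\<lambda>h'. Inv0 h' \<and> h' 0 = N k \<and> cells h' (cntf ({1..<Suc k} - {i}))))"
  proof (rule spec_If)
    assume "beval AG (mm h)"
    then have ki: "k = i" using h unfolding AG_def by simp
    have "{1..<Suc k} - {i} = {1..<k} - {i}" using ki by auto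
    then show "spec Skip (mm h) (41 + 1000 * X3) (st (\<lambda>h'. Inv0 h' \<and> h' 0 = N k \<and> cells h' (cntf ({1..<Suc k} - {i}))))"
      using h by (intro spec_lf) auto
  next
    assume "\<not> beval AG (mm h)"
    then have ki: "k \<noteq> i" using h unfolding AG_def by auto
    define h1 where "h1 = h(10 := N (l k), 11 := N (w k))"
    have r: "run (Seq (SV 10 (Load (V 0))) (SV 11 (INW (V 0)))) (mm h) = mm h1"
    proof -
      have "eval (Load (V 0)) (mm h) = N (l k)" using h j unfolding k_def by (intro eval_INL) auto
      moreover have "eval (INW (V 0)) (mm (h(10 := N (l k)))) = N (w k)" using h j unfolding k_def by (intro eval_INW) auto
      ultimately show ?thesis unfolding h1_def by simp
    qed
    have h1: "Inv0 h1" "h1 0 = N k" "h1 10 = N (l k)" "h1 11 = N (w k)" "cells h1 (cntf ({1..<k} - {i}))"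
      using h unfolding h1_def by (auto intro!: Inv0_upd cells_upd)
    have P: "{1..<k} - {i} \<subseteq> {1..n}" "k \<notin> {1..<k} - {i}" using k by auto
    have ins: "insert k ({1..<k} - {i}) = {1..<Suc k} - {i}" using ki k by auto
    have "spec (Seq (SV 10 (Load (V 0))) (Seq (SV 11 (INW (V 0))) LLOOP)) (mm h) (41 + 1000 * X3)
       (st (\<lambda>h'. Inv0 h' \<and> h' 0 = N k \<and> cells h' (cntf ({1..<Suc k} - {i}))))"
    proof (rule spec_Seq_lf, simp, rule spec_Seq_lf, simp)
      have "run (SV 11 (INW (V 0))) (run (SV 10 (Load (V 0))) (mm h)) = mm h1" using r by simp
      then show "spec LLOOP (run (SV 11 (INW (V 0))) (run (SV 10 (Load (V 0))) (mm h))) (1000 * X3)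
         (st (\<lambda>h'. Inv0 h' \<and> h' 0 = N k \<and> cells h' (cntf ({1..<Suc k} - {i}))))"
        using LLOOP_spec[OF h1 P(1) k P(2)] unfolding ins by simp
    qed (rule order_refl | simp)+
    then show "spec (Seq (SV 10 (Load (V 0))) (Seq (SV 11 (INW (V 0))) LLOOP)) (mm h) (41 + 1000 * X3)
       (st (\<lambda>h'. Inv0 h' \<and> h' 0 = N k \<and> cells h' (cntf ({1..<Suc k} - {i}))))" .
  qed (simp add: bcost_AG)
  show ?thesis unfolding ABODY_def
  proof (rule spec_Seq_st[OF if_spec])
    fix h' assume h': "Inv0 h' \<and> h' 0 = N k \<and> cells h' (cntf ({1..<Suc k} - {i}))"
    have "AI (Suc j) (h'(0 := N (Suc k)))" using h' unfolding AI_def k_def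
      by (auto intro!: Inv0_upd cells_upd)
    then show "spec (SV 0 (Plus (V 0) (C 1))) (mm h') 20 (st (AI (Suc j)))"
      using h' by (intro spec_lf) auto
  qed (use X_ge in simp)
qed

lemma ALOOP_spec:
  assumes h: "Inv0 h" "cells h (cntf {})"
  shows "spec ALOOP (mm h) (1300 * X4) (st (\<lambda>h'. Inv0 h' \<and> cells h' (cntf ({1..n} - {i}))))"
  unfolding ALOOP_def
proof (rule spec_Seq_lf)
  have "AI 0 (h(0 := N 1))" using h unfolding AI_def by (auto intro!: Inv0_upd cells_upd)
  moreover have "run (SV 0 (C 1)) (mm h) = mm (h(0 := N 1))" by simp
  moreover have "spec (While AGG ABODY) (mm (h(0 := N 1))) (1290 * X4) (st (\<lambda>h'. Inv0 h' \<and> cells h' (cntf ({1..n} - {i}))))"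
  proof (rule spec_While_st[where P = AI and m = n and Bd = "1100 * X3"])
    show "AI 0 (h(0 := N 1))" by fact
  next
    fix j h' assume j: "j < n" and ai: "AI j h'"
    have "beval AGG (mm h')" using ai j unfolding AI_def AGG_def by simp
    then show "beval AGG (mm h') \<and> spec ABODY (mm h') (1100 * X3) (st (AI (Suc j)))"
      using ABODY_spec[OF ai j] by simp
  next
    fix h' assume ai: "AI n h'"
    have "{1..<Suc n} = {1..n}" by auto
    then show "\<not> beval AGG (mm h') \<and> Inv0 h' \<and> cells h' (cntf ({1..n} - {i}))"
      using ai unfolding AI_def AGG_def by simp
  next
    have "n * (1 + bcost AGG + 1100 * X3) + 1 + bcost AGG \<le> Suc n * (1200 * X3)"
      using X_ge unfolding bcost_AGG by (intro loop_bound) auto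
    then show "n * (1 + bcost AGG + 1100 * X3) + 1 + bcost AGG \<le> 1290 * X4"
      unfolding X4_def by simp
  qed
  ultimately show "spec (While AGG ABODY) (run (SV 0 (C 1)) (mm h)) (1290 * X4) (st (\<lambda>h'. Inv0 h' \<and> cells h' (cntf ({1..n} - {i}))))"
    by simp
qed (use X_ge in auto)

end

definition S1 :: com where "S1 = Seq (SV 18 INLB) (Seq (SV 15 (C 0)) (SV 0 (C 1)))"
definition RBODY :: com where
  "RBODY = Seq (SV 9 (Divide (INW (V 0)) (Load (V 0)))) (Seq (If (Le (V 15) (V 9)) (SV 15 (V 9)) Skip) (SV 0 (Plus (V 0) (C 1))))"
definition WG :: bexp where "WG = Not (Le (Times (V 18) (V 15)) (V 12))"
definition WBODY :: com where "WBODY = SV 12 (Plus (V 12) (C 1))"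
definition S3 :: com where "S3 = Seq (SV 13 (Plus (V 12) (C 1))) (Seq (SV 14 (C 1)) (SV 3 (C 0)))"
definition QBODY :: com where "QBODY = Seq (SV 14 (Times (V 14) (V 13))) (SV 3 (Plus (V 3) (C 1)))"
definition TBODY :: com where "TBODY = Seq (wr (Plus (C 24) (V 2)) (V 2)) (SV 2 (Plus (V 2) (C 1)))"
definition S5 :: com where "S5 = Seq (SV 19 (Plus (C 24) (V 14))) (wr (V 19) (C 1))"
definition SETUP :: com where
  "SETUP = Seq S1 (Seq (While AGG RBODY) (Seq (SV 12 (C 0)) (Seq (While WG WBODY) (Seq S3
     (Seq (While CGUARD QBODY) (Seq (SV 2 (C 0)) (Seq (While XG TBODY) S5)))))))"

lemma bcost_WG: "bcost WG = 30" unfolding WG_def by simp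

context KS begin

definition rt :: "nat \<Rightarrow> rat" where "rt k = N (w k) / N (l k)"
definition rq :: "nat \<Rightarrow> rat" where "rq j = Max (insert 0 (rt ` {1..<j}))"

definition Z :: "(nat \<Rightarrow> rat) \<Rightarrow> bool" where "Z h \<longleftrightarrow> (\<forall>a\<ge>24. h a = 0)"

lemma Z_upd: "a < 24 \<Longrightarrow> Z h \<Longrightarrow> Z (h(a := v))" unfolding Z_def by auto

lemma rq_step: "1 \<le> k \<Longrightarrow> rq (Suc k) = max (rt k) (rq k)"
proof -
  assume k: "1 \<le> k"
  have "{1..<Suc k} = insert k {1..<k}" using k by auto
  then have "insert 0 (rt ` {1..<Suc k}) = insert (rt k) (insert 0 (rt ` {1..<k}))" by auto
  then show ?thesis unfolding rq_def by (simp add: Max_insert)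
qed

lemma rq_nonneg: "0 \<le> rq j" unfolding rq_def by (rule Max_ge) auto

definition RI :: "nat \<Rightarrow> (nat \<Rightarrow> rat) \<Rightarrow> bool" where
  "RI j h \<longleftrightarrow> h 18 = N lbin \<and> h 0 = N (Suc j) \<and> h 15 = rq (Suc j) \<and> Z h"

lemma RBODY_step:
  assumes ri: "RI j h" and j: "j < n"
  shows "spec RBODY (mm h) 200 (st (RI (Suc j)))"
proof (rule spec_lf)
  have h: "h 18 = N lbin" "h 0 = N (Suc j)" "h 15 = rq (Suc j)" "Z h" using ri unfolding RI_def by auto
  have e1: "eval (Load (V 0)) (mm h) = N (l (Suc j))" using h j by (intro eval_INL) auto
  have e2: "eval (INW (V 0)) (mm h) = N (w (Suc j))" using h j by (intro eval_INW) auto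
  have rs: "rq (Suc (Suc j)) = max (rt (Suc j)) (rq (Suc j))" by (rule rq_step) simp
  show "st (RI (Suc j)) (run RBODY (mm h))"
    unfolding RBODY_def using h e1 e2 rs
    by (auto simp: RI_def rt_def[symmetric] max_def intro!: Z_upd)
qed (simp add: RBODY_def)+

definition "rmx = rq (Suc n)"

lemma rr_rmx: "rr = of_rat rmx"
proof -
  have fin: "finite (insert 0 (rt ` {1..n}))" by simp
  have "of_rat (Max (insert 0 (rt ` {1..n}))) = Max (of_rat ` (insert 0 (rt ` {1..n})) :: real set)"
    by (rule mono_Max_commute[OF _ fin]) (auto simp: mono_def of_rat_less_eq)
  also have "of_rat ` (insert 0 (rt ` {1..n})) = insert 0 ((\<lambda>k. real (w k) / real (l k)) ` {1..n})"
    unfolding rt_def N_def by (auto simp: of_rat_divide image_image)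
  also have "Max (insert 0 ((\<lambda>k. real (w k) / real (l k)) ` {1..n})) = rr"
  proof -
    have ne: "(\<lambda>k. real (w k) / real (l k)) ` {1..n} \<noteq> {}" using npos by auto
    have "Max (insert 0 ((\<lambda>k. real (w k) / real (l k)) ` {1..n})) = max 0 rr"
      unfolding rr_def using ne by (simp add: Max_insert)
    then show ?thesis using rr_nonneg by simp
  qed
  finally show ?thesis unfolding rmx_def rq_def by (simp add: atLeastLessThanSuc_atLeastAtMost)
qed

lemma W_rmx: "W = nat \<lceil>N lbin * rmx\<rceil>"
proof -
  have "real lbin * rr = of_rat (N lbin * rmx)" unfolding rr_rmx N_def by (simp add: of_rat_mult)
  then have "w_max n l w lbin = \<lceil>N lbin * rmx\<rceil>" unfolding w_max_def rr_def[symmetric] by simp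
  then show ?thesis unfolding W_def by simp
qed

lemma W_guard: "j \<le> W \<Longrightarrow> (N lbin * rmx \<le> N j) \<longleftrightarrow> j = W"
proof -
  assume j: "j \<le> W"
  have q0: "0 \<le> N lbin * rmx" unfolding rmx_def using rq_nonneg by simp
  show ?thesis
  proof
    assume le: "N lbin * rmx \<le> N j"
    then have "\<lceil>N lbin * rmx\<rceil> \<le> int j" unfolding N_def by (simp add: ceiling_le_iff)
    then have "W \<le> j" unfolding W_rmx by simp
    then show "j = W" using j by simp
  next
    assume "j = W"
    then have "int j = \<lceil>N lbin * rmx\<rceil>" unfolding W_rmx using q0 by simp
    then show "N lbin * rmx \<le> N j" unfolding N_def by (metis le_of_int_ceiling of_int_of_nat_eq)
  qed
qed

lemma W_lt_Q: "W < Q"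
proof -
  have "B ^ 1 \<le> B ^ Suc lbin" using Bpos by (intro power_increasing) auto
  then show ?thesis unfolding Q_def B_def by simp
qed

lemma X4_ge: "Suc n \<le> X4" "Suc Q \<le> X4" "X1 \<le> X4" "1 \<le> X4"
proof -
  have a: "X1 \<le> X2" "X2 \<le> X3" "X3 \<le> X4" "3 \<le> X1" using X_ge by auto
  have "Suc Q * 1 \<le> Suc Q * X1" using a(4) by (intro mult_le_mono2) auto
  then have "Suc Q \<le> X2" unfolding X2_def by simp
  moreover have "Suc n * 1 \<le> Suc n * X2" using a by (intro mult_le_mono2) auto
  then have "Suc n \<le> X3" unfolding X3_def by simp
  ultimately show "Suc n \<le> X4" "Suc Q \<le> X4" "X1 \<le> X4" "1 \<le> X4" using a by auto
qed

lemma mulc: "a \<le> X \<Longrightarrow> a * (c::nat) \<le> c * X" by (simp add: mult.commute)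

definition WI :: "nat \<Rightarrow> (nat \<Rightarrow> rat) \<Rightarrow> bool" where
  "WI j h \<longleftrightarrow> h 18 = N lbin \<and> h 15 = rmx \<and> h 12 = N j \<and> Z h"
definition QI :: "nat \<Rightarrow> (nat \<Rightarrow> rat) \<Rightarrow> bool" where
  "QI j h \<longleftrightarrow> h 18 = N lbin \<and> h 12 = N W \<and> h 13 = N B \<and> h 14 = N (B ^ j) \<and> h 3 = N j \<and> Z h"
definition TI :: "nat \<Rightarrow> (nat \<Rightarrow> rat) \<Rightarrow> bool" where
  "TI j h \<longleftrightarrow> h 18 = N lbin \<and> h 12 = N W \<and> h 13 = N B \<and> h 14 = N Q \<and> h 2 = N j \<and>
     (\<forall>z<j. h (24 + z) = N z) \<and> (\<forall>a\<ge>24 + Q. h a = 0)"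

lemma RLOOP_spec: "RI 0 h \<Longrightarrow> spec (While AGG RBODY) (mm h) (Suc n * 213) (st (WI 0 \<circ> (\<lambda>h. h(12 := N 0))))"
proof (rule spec_While_st[where P = RI and m = n and Bd = 200])
  fix j h' assume "j < n" "RI j h'"
  then show "beval AGG (mm h') \<and> spec RBODY (mm h') 200 (st (RI (Suc j)))"
    using RBODY_step unfolding RI_def AGG_def by simp
next
  fix h' assume "RI n h'"
  then show "\<not> beval AGG (mm h') \<and> (WI 0 \<circ> (\<lambda>h. h(12 := N 0))) h'"
    unfolding RI_def AGG_def WI_def rmx_def by (auto intro: Z_upd)
next
  show "n * (1 + bcost AGG + 200) + 1 + bcost AGG \<le> Suc n * 213"
    unfolding bcost_AGG by (intro loop_bound) auto
qed

lemma WLOOP_spec: "WI 0 h \<Longrightarrow> spec (While WG WBODY) (mm h) (Suc W * 51) (st (WI W))"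
proof (rule spec_While_st[where P = WI and m = W and Bd = 20])
  fix j h' assume j: "j < W" and wi: "WI j h'"
  have "\<not> (N lbin * rmx \<le> N j)" using W_guard[of j] j by auto
  then have g: "beval WG (mm h')" using wi unfolding WI_def WG_def by simp
  have "spec WBODY (mm h') 20 (st (WI (Suc j)))"
    using wi unfolding WBODY_def WI_def by (intro spec_lf) (auto intro: Z_upd)
  then show "beval WG (mm h') \<and> spec WBODY (mm h') 20 (st (WI (Suc j)))" using g by simp
next
  fix h' assume wi: "WI W h'"
  have "N lbin * rmx \<le> N W" using W_guard[of W] by simp
  then show "\<not> beval WG (mm h') \<and> WI W h'" using wi unfolding WI_def WG_def by simp
next
  show "W * (1 + bcost WG + 20) + 1 + bcost WG \<le> Suc W * 51"
    unfolding bcost_WG by (intro loop_bound) auto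
qed

lemma QLOOP_spec: "QI 0 h \<Longrightarrow> spec (While CGUARD QBODY) (mm h) (Suc (Suc lbin) * 68) (st (QI (Suc lbin)))"
proof (rule spec_While_st[where P = QI and m = "Suc lbin" and Bd = 48])
  fix j h' assume j: "j < Suc lbin" and qi: "QI j h'"
  have g: "beval CGUARD (mm h')" using qi j unfolding QI_def CGUARD_def by simp
  have "spec QBODY (mm h') 48 (st (QI (Suc j)))"
    using qi unfolding QBODY_def QI_def by (intro spec_lf) (auto intro!: Z_upd simp: mult.commute)
  then show "beval CGUARD (mm h') \<and> spec QBODY (mm h') 48 (st (QI (Suc j)))" using g by simp
next
  fix h' assume qi: "QI (Suc lbin) h'"
  then show "\<not> beval CGUARD (mm h') \<and> QI (Suc lbin) h'" unfolding QI_def CGUARD_def by simp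
next
  show "Suc lbin * (1 + bcost CGUARD + 48) + 1 + bcost CGUARD \<le> Suc (Suc lbin) * 68"
    unfolding bcost_CGUARD by (intro loop_bound) auto
qed

lemma TLOOP_spec: "TI 0 h \<Longrightarrow> spec (While XG TBODY) (mm h) (Suc Q * 69) (st (TI Q))"
proof (rule spec_While_st[where P = TI and m = Q and Bd = 48])
  fix j h' assume j: "j < Q" and ti: "TI j h'"
  have g: "beval XG (mm h')" using ti j unfolding TI_def XG_def by simp
  have r: "run TBODY (mm h') = mm (h'(24 + j := N j, 2 := N (Suc j)))"
    using ti unfolding TBODY_def TI_def by simp
  have "TI (Suc j) (h'(24 + j := N j, 2 := N (Suc j)))"
    using ti j unfolding TI_def by (auto simp: less_Suc_eq)
  then have "spec TBODY (mm h') 48 (st (TI (Suc j)))"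
    using r by (intro spec_lf) (auto simp: TBODY_def)
  then show "beval XG (mm h') \<and> spec TBODY (mm h') 48 (st (TI (Suc j)))" using g by simp
next
  fix h' assume ti: "TI Q h'"
  then show "\<not> beval XG (mm h') \<and> TI Q h'" unfolding TI_def XG_def by simp
next
  show "Q * (1 + bcost XG + 48) + 1 + bcost XG \<le> Suc Q * 69"
    unfolding bcost_XG by (intro loop_bound) auto
qed

lemma S5_post:
  assumes ti: "TI Q h"
  shows "run S5 (mm h) = mm (h(19 := N CB, CB := N 1))" and "Inv0 (h(19 := N CB, CB := N 1))"
    and "cells (h(19 := N CB, CB := N 1)) (cntf {})"
proof -
  show "run S5 (mm h) = mm (h(19 := N CB, CB := N 1))" using ti unfolding S5_def TI_def CB_def by simp
  show "Inv0 (h(19 := N CB, CB := N 1))" using ti unfolding TI_def Inv0_def CB_def by auto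
  have Qpos: "0 < Q" unfolding Q_def using Bpos by simp
  show "cells (h(19 := N CB, CB := N 1)) (cntf {})"
    unfolding cells_def cnt_empty
  proof (intro allI impI)
    fix t y assume "t \<le> n" "y < Q"
    show "(h(19 := N CB, CB := N 1)) (CB + t * Q + y) = N (if t = 0 \<and> y = 0 then 1 else 0)"
    proof (cases "t = 0 \<and> y = 0")
      case True then show ?thesis by simp
    next
      case False
      have "t * Q + y \<noteq> 0"
      proof (cases "t = 0")
        case True with False have "y \<noteq> 0" by simp
        then show ?thesis by simp
      next
        case False with Qpos show ?thesis by simp
      qed
      then have "CB + t * Q + y \<noteq> CB" by simp
      moreover have ge: "24 + Q \<le> CB + t * Q + y" unfolding CB_def by simp
      moreover have "CB + t * Q + y \<noteq> 19" using ge by auto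
      moreover have "h (CB + t * Q + y) = 0" using ti ge unfolding TI_def by auto
      ultimately show ?thesis using False by (auto simp: N_def)
    qed
  qed
qed

lemma SETUP_spec: "spec SETUP (mm (\<lambda>_. 0)) (1000 * X4) (st (\<lambda>h. Inv0 h \<and> cells h (cntf {})))"
proof -
  define h0 where "h0 = (\<lambda>_::nat. 0::rat)(18 := N lbin, 15 := N 0, 0 := N 1)"
  have r1: "run S1 (mm (\<lambda>_. 0)) = mm h0" unfolding S1_def h0_def by simp
  have ri: "RI 0 h0" unfolding RI_def h0_def Z_def rq_def by (simp add: N_def)
  have c: "cst S1 \<le> 50" "cst (SV 12 (C 0)) \<le> 10" "cst S3 \<le> 60" "cst (SV 2 (C 0)) \<le> 10" "cst S5 \<le> 50"
    unfolding S1_def S3_def S5_def by simp_all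
  have bnd: "50 + (Suc n * 213 + (10 + (Suc W * 51 + (60 + (Suc (Suc lbin) * 68 + (10 + (Suc Q * 69 + 50))))))) \<le> 1000 * X4"
  proof -
    have "Suc W \<le> X4" using W_lt_Q X4_ge by simp
    then have 1: "Suc W * 51 \<le> 51 * X4" by (rule mulc)
    have "Suc (Suc lbin) \<le> X4" using X4_ge unfolding X1_def by simp
    then have 2: "Suc (Suc lbin) * 68 \<le> 68 * X4" by (rule mulc)
    have 3: "Suc n * 213 \<le> 213 * X4" using X4_ge by (intro mulc) auto
    have 4: "Suc Q * 69 \<le> 69 * X4" using X4_ge by (intro mulc) auto
    show ?thesis using 1 2 3 4 X4_ge by linarith
  qed
  show ?thesis unfolding SETUP_def
  proof (rule spec_Seq_lf[of S1 _ _ "Suc n * 213 + (10 + (Suc W * 51 + (60 + (Suc (Suc lbin) * 68 + (10 + (Suc Q * 69 + 50))))))"])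
    show "spec (Seq (While AGG RBODY) (Seq (SV 12 (C 0)) (Seq (While WG WBODY) (Seq S3
     (Seq (While CGUARD QBODY) (Seq (SV 2 (C 0)) (Seq (While XG TBODY) S5))))))) (run S1 (mm (\<lambda>_. 0)))
      (Suc n * 213 + (10 + (Suc W * 51 + (60 + (Suc (Suc lbin) * 68 + (10 + (Suc Q * 69 + 50)))))))
      (st (\<lambda>h. Inv0 h \<and> cells h (cntf {})))"
      unfolding r1
    proof (rule spec_Seq_st[OF RLOOP_spec[OF ri]])
      fix h1 assume "(WI 0 \<circ> (\<lambda>h. h(12 := N 0))) h1"
      then have w0: "WI 0 (h1(12 := N 0))" by simp
      show "spec (Seq (SV 12 (C 0)) (Seq (While WG WBODY) (Seq S3 (Seq (While CGUARD QBODY) (Seq (SV 2 (C 0)) (Seq (While XG TBODY) S5))))))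
         (mm h1) (10 + (Suc W * 51 + (60 + (Suc (Suc lbin) * 68 + (10 + (Suc Q * 69 + 50))))))
         (st (\<lambda>h. Inv0 h \<and> cells h (cntf {})))"
      proof (rule spec_Seq_lf, simp, simp)
        show "spec (Seq (While WG WBODY) (Seq S3 (Seq (While CGUARD QBODY) (Seq (SV 2 (C 0)) (Seq (While XG TBODY) S5)))))
           (mm (h1(12 := N 0))) (Suc W * 51 + (60 + (Suc (Suc lbin) * 68 + (10 + (Suc Q * 69 + 50)))))
           (st (\<lambda>h. Inv0 h \<and> cells h (cntf {})))"
        proof (rule spec_Seq_st[OF WLOOP_spec[OF w0]])
          fix h2 assume w: "WI W h2"
          define h3 where "h3 = h2(13 := N B, 14 := N 1, 3 := N 0)"
          have r3: "run S3 (mm h2) = mm h3" using w unfolding S3_def WI_def h3_def B_def by simp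
          have q0: "QI 0 h3" using w unfolding QI_def WI_def h3_def by (auto intro!: Z_upd)
          show "spec (Seq S3 (Seq (While CGUARD QBODY) (Seq (SV 2 (C 0)) (Seq (While XG TBODY) S5))))
             (mm h2) (60 + (Suc (Suc lbin) * 68 + (10 + (Suc Q * 69 + 50)))) (st (\<lambda>h. Inv0 h \<and> cells h (cntf {})))"
          proof (rule spec_Seq_lf, simp add: S3_def, unfold r3)
            show "spec (Seq (While CGUARD QBODY) (Seq (SV 2 (C 0)) (Seq (While XG TBODY) S5))) (mm h3)
               (Suc (Suc lbin) * 68 + (10 + (Suc Q * 69 + 50))) (st (\<lambda>h. Inv0 h \<and> cells h (cntf {})))"
            proof (rule spec_Seq_st[OF QLOOP_spec[OF q0]])
              fix h4 assume q: "QI (Suc lbin) h4"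
              have t0: "TI 0 (h4(2 := N 0))" using q unfolding QI_def TI_def Z_def Q_def by auto
              show "spec (Seq (SV 2 (C 0)) (Seq (While XG TBODY) S5)) (mm h4) (10 + (Suc Q * 69 + 50))
                 (st (\<lambda>h. Inv0 h \<and> cells h (cntf {})))"
              proof (rule spec_Seq_lf, simp, simp)
                show "spec (Seq (While XG TBODY) S5) (mm (h4(2 := N 0))) (Suc Q * 69 + 50) (st (\<lambda>h. Inv0 h \<and> cells h (cntf {})))"
                proof (rule spec_Seq_st[OF TLOOP_spec[OF t0]])
                  fix h5 assume t: "TI Q h5"
                  show "spec S5 (mm h5) 50 (st (\<lambda>h. Inv0 h \<and> cells h (cntf {})))"
                    using S5_post[OF t] c(5) by (intro spec_lf) (auto simp: S5_def)
                qed simp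
              qed simp
            qed simp
          qed (use c in simp)
        qed simp
      qed simp
    qed simp
  qed (use c bnd in \<open>auto simp: S1_def\<close>)
qed

end

definition F1 :: com where
  "F1 = Seq (SV 10 (Load INI)) (Seq (SV 11 (INW INI)) (Seq (SV 16 (C 0)) (Seq (SV 17 (Divide (C 1) nE)) (SV 1 (C 0)))))"
definition FCELL :: expr where "FCELL = Plus (Plus (V 19) (Times (V 1) (V 14))) (V 2)"
definition FREST :: com where
  "FREST = Seq (SV 16 (Plus (V 16) (Times (Times (V 17) (rd FCELL)) (Minus (V 8) (V 7))))) (SV 2 (Plus (V 2) (C 1)))"
definition FXBODY :: com where "FXBODY = Seq CLOOP FREST"
definition FXLOOP :: com where "FXLOOP = Seq (SV 2 (C 0)) (While XG FXBODY)"
definition FBODY :: com where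
  "FBODY = Seq FXLOOP (Seq (SV 17 (Divide (Times (V 17) (Plus (V 1) (C 1))) (Minus (Minus nE (V 1)) (C 1)))) (SV 1 (Plus (V 1) (C 1))))"
definition FG :: bexp where "FG = Not (Le nE (V 1))"
definition FOUT :: com where "FOUT = Store (Const 0) (V 16)"
definition FINAL :: com where "FINAL = Seq F1 (Seq (While FG FBODY) FOUT)"

lemma lf_FREST: "lf FREST" unfolding FREST_def by simp
lemma cst_FREST: "cst FREST \<le> 200" unfolding FREST_def FCELL_def by simp
lemma bcost_FG: "bcost FG = 13" unfolding FG_def by simp

context KS begin

definition "PP = {1..n} - {i}"
definition coefQ :: "nat \<Rightarrow> rat" where "coefQ s = fact s * fact (n - s - 1) / fact n"
definition tm :: "nat \<Rightarrow> nat \<Rightarrow> rat" where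
  "tm s x = coefQ s * N (cntf PP s x) * (N (gf i x lbin) - N (dig x lbin))"
definition accQ :: "nat \<Rightarrow> rat" where "accQ s = (\<Sum>s'<s. \<Sum>x<Q. tm s' x)"

lemma coef0: "coefQ 0 = N 1 / N n"
proof -
  have f: "fact n = (of_nat n * fact (n - 1) :: rat)" using npos by (simp add: fact_reduce)
  have "coefQ 0 = fact (n - 1) / fact n" unfolding coefQ_def by simp
  also have "\<dots> = 1 / of_nat n" unfolding f by simp
  finally show ?thesis unfolding N_def by simp
qed

lemma coef_step: "Suc s < n \<Longrightarrow> coefQ (Suc s) = coefQ s * N (Suc s) / N (n - s - 1)"
proof -
  assume s: "Suc s < n"
  define m where "m = n - s - 2"
  have m: "n - s - 1 = Suc m" using s unfolding m_def by arith
  have m2: "n - Suc s - 1 = m" using m by simp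
  have "coefQ s * N (Suc s) / N (n - s - 1) = fact s * (fact (Suc m) :: rat) / fact n * of_nat (Suc s) / of_nat (Suc m)"
    unfolding coefQ_def m N_def by simp
  also have "\<dots> = fact (Suc s) * fact m / fact n"
    by (simp add: field_simps del: of_nat_Suc)
  also have "\<dots> = coefQ (Suc s)" unfolding coefQ_def m2 ..
  finally show ?thesis by simp
qed

lemma Inv0_frame: "Inv0 h \<Longrightarrow> \<forall>a. a \<notin> {3..9} \<longrightarrow> h1 a = h a \<Longrightarrow> Inv0 h1"
  unfolding Inv0_def by auto
lemma cells_frame: "cells h F \<Longrightarrow> \<forall>a. a \<notin> {3..9} \<longrightarrow> h1 a = h a \<Longrightarrow> cells h1 F"
proof -
  assume c: "cells h F" and fr: "\<forall>a. a \<notin> {3..9} \<longrightarrow> h1 a = h a"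
  have "\<And>t y. h1 (CB + t * Q + y) = h (CB + t * Q + y)"
  proof -
    fix t y
    have "CB + t * Q + y \<notin> {3..9}" using cell_big[of t y] by auto
    then show "h1 (CB + t * Q + y) = h (CB + t * Q + y)" using fr by blast
  qed
  then show ?thesis using c unfolding cells_def by simp
qed

definition FI :: "nat \<Rightarrow> (nat \<Rightarrow> rat) \<Rightarrow> bool" where
  "FI s h \<longleftrightarrow> Inv0 h \<and> h 10 = N (l i) \<and> h 11 = N (w i) \<and> h 1 = N s \<and> cells h (cntf PP) \<and>
     h 16 = accQ s \<and> (s < n \<longrightarrow> h 17 = coefQ s)"
definition FXI :: "nat \<Rightarrow> nat \<Rightarrow> (nat \<Rightarrow> rat) \<Rightarrow> bool" where
  "FXI s j h \<longleftrightarrow> Inv0 h \<and> h 10 = N (l i) \<and> h 11 = N (w i) \<and> h 1 = N s \<and> h 2 = N j \<and> cells h (cntf PP) \<and>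
     h 17 = coefQ s \<and> h 16 = accQ s + (\<Sum>x<j. tm s x)"

lemma FREST_run:
  assumes "h1 1 = N s" "h1 14 = N Q" "h1 19 = N CB" "h1 2 = N j"
  shows "run FREST (mm h1) = mm (h1(16 := h1 16 + h1 17 * h1 (CB + s * Q + j) * (h1 8 - h1 7), 2 := N (Suc j)))"
  using assms unfolding FREST_def FCELL_def by simp

lemma FXBODY_spec:
  assumes fx: "FXI s j h" and s: "s < n" and j: "j < Q"
  shows "spec FXBODY (mm h) (bC + 200) (st (FXI s (Suc j)))"
proof -
  have I0: "Inv0 h" "h 2 = N j" "h 10 = N (l i)" "h 11 = N (w i)" "h 1 = N s"
    using fx unfolding FXI_def by auto
  have v: "h 14 = N Q" "h 19 = N CB" using I0(1) unfolding Inv0_def by auto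
  show ?thesis unfolding FXBODY_def
  proof (rule spec_CLOOP_then[OF I0(1,2) j I0(3,4) _ lf_FREST cst_FREST])
    fix h1 assume fr: "\<forall>a. a \<notin> {3..9} \<longrightarrow> h1 a = h a" and h7: "h1 7 = N (dig j lbin)"
      and h8: "h1 8 = N (gfp (l i) (w i) j lbin)"
    have hv: "h1 1 = N s" "h1 14 = N Q" "h1 19 = N CB" "h1 2 = N j" "h1 16 = h 16" "h1 17 = h 17" "h1 10 = h 10" "h1 11 = h 11"
      using fr I0 v by auto
    have cl: "cells h1 (cntf PP)" using fx fr unfolding FXI_def by (auto intro: cells_frame)
    have hc: "h1 (CB + s * Q + j) = N (cntf PP s j)" using cl s j unfolding cells_def by auto
    have i1: "Inv0 h1" using fx fr unfolding FXI_def by (auto intro: Inv0_frame)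
    have val: "h1 16 + h1 17 * h1 (CB + s * Q + j) * (h1 8 - h1 7) = accQ s + (\<Sum>x<Suc j. tm s x)"
    proof -
      have a: "h 16 = accQ s + (\<Sum>x<j. tm s x)" "h 17 = coefQ s" using fx unfolding FXI_def by auto
      show ?thesis unfolding hv hc h7 h8 a tm_def gf_gfp by simp
    qed
    have "FXI s (Suc j) (h1(16 := h1 16 + h1 17 * h1 (CB + s * Q + j) * (h1 8 - h1 7), 2 := N (Suc j)))"
      unfolding FXI_def val using i1 cl fx hv unfolding FXI_def by (auto intro!: Inv0_upd cells_upd)
    then show "st (FXI s (Suc j)) (run FREST (mm h1))" using FREST_run[OF hv(1-4)] by simp
  qed
qed

lemma FXLOOP_spec:
  assumes fi: "FI s h" and s: "s < n"
  shows "spec FXLOOP (mm h) (800 * X2) (st (FXI s Q))"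
  unfolding FXLOOP_def
proof (rule spec_Seq_lf)
  have "FXI s 0 (h(2 := N 0))" using fi s unfolding FI_def FXI_def
    by (auto intro: Inv0_upd cells_upd)
  moreover have "run (SV 2 (C 0)) (mm h) = mm (h(2 := N 0))" by simp
  moreover have "spec (While XG FXBODY) (mm (h(2 := N 0))) (790 * X2) (st (FXI s Q))"
  proof (rule spec_While_st[where P = "FXI s" and m = Q and Bd = "bC + 200"])
    show "FXI s 0 (h(2 := N 0))" by fact
  next
    fix j h' assume j: "j < Q" and fx: "FXI s j h'"
    have "beval XG (mm h')" using fx j unfolding FXI_def Inv0_def XG_def by simp
    then show "beval XG (mm h') \<and> spec FXBODY (mm h') (bC + 200) (st (FXI s (Suc j)))"
      using FXBODY_spec[OF fx s j] by simp
  next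
    fix h' assume "FXI s Q h'"
    then show "\<not> beval XG (mm h') \<and> FXI s Q h'" unfolding FXI_def Inv0_def XG_def by simp
  next
    have "Q * (1 + bcost XG + (bC + 200)) + 1 + bcost XG \<le> Suc Q * (700 * X1)"
      using X_ge unfolding bcost_XG bC_def X1_def by (intro loop_bound) auto
    then show "Q * (1 + bcost XG + (bC + 200)) + 1 + bcost XG \<le> 790 * X2"
      unfolding X2_def by simp
  qed
  ultimately show "spec (While XG FXBODY) (run (SV 2 (C 0)) (mm h)) (790 * X2) (st (FXI s Q))" by simp
qed (use X_ge in auto)

end

lemma of_rat_fact: "(of_rat (fact k :: rat) :: real) = fact k"
  by (metis of_nat_fact of_rat_of_nat_eq)


definition PROG :: com where "PROG = Seq SETUP (Seq ALOOP FINAL)"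

lemma cst_F1: "cst F1 \<le> 100" unfolding F1_def by simp
lemma cst_FOUT: "cst FOUT = 11" unfolding FOUT_def by simp
lemma lf_F1: "lf F1" unfolding F1_def by simp

context KS begin

lemma FBODY_spec:
  assumes fi: "FI s h" and s: "s < n"
  shows "spec FBODY (mm h) (900 * X2) (st (FI (Suc s)))"
  unfolding FBODY_def
proof (rule spec_Seq_st[OF FXLOOP_spec[OF fi s]])
  fix h' assume fx: "FXI s Q h'"
  have v: "h' 17 = coefQ s" "h' 1 = N s" "h' 16 = accQ s + (\<Sum>x<Q. tm s x)" using fx unfolding FXI_def by auto
  define h2 where "h2 = h'(17 := coefQ s * N (Suc s) / N (n - s - 1), 1 := N (Suc s))"
  have r: "run (Seq (SV 17 (Divide (Times (V 17) (Plus (V 1) (C 1))) (Minus (Minus nE (V 1)) (C 1)))) (SV 1 (Plus (V 1) (C 1)))) (mm h')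
     = mm h2" unfolding h2_def using v s by simp
  have "FI (Suc s) h2"
  proof -
    have "accQ (Suc s) = accQ s + (\<Sum>x<Q. tm s x)" unfolding accQ_def by (rule sum.lessThan_Suc)
    moreover have "h2 16 = h' 16" unfolding h2_def by simp
    ultimately have "h2 16 = accQ (Suc s)" using v(3) by simp
    moreover have "Suc s < n \<longrightarrow> h2 17 = coefQ (Suc s)" unfolding h2_def using coef_step by simp
    moreover have "Inv0 h2" "cells h2 (cntf PP)" using fx unfolding h2_def FXI_def by (auto intro!: Inv0_upd cells_upd)
    ultimately show ?thesis using fx unfolding FI_def FXI_def h2_def by simp
  qed
  then show "spec (Seq (SV 17 (Divide (Times (V 17) (Plus (V 1) (C 1))) (Minus (Minus nE (V 1)) (C 1)))) (SV 1 (Plus (V 1) (C 1)))) (mm h') 100 (st (FI (Suc s)))"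
    using r by (intro spec_lf) auto
qed (use X_ge in simp)

lemma FINAL_spec:
  assumes h: "Inv0 h" "cells h (cntf PP)"
  shows "spec FINAL (mm h) (1100 * X4) (\<lambda>M. M 0 = accQ n)"
  unfolding FINAL_def
proof (rule spec_Seq_lf[OF lf_F1])
  define h0 where "h0 = h(10 := N (l i), 11 := N (w i), 16 := N 0, 17 := N 1 / N n, 1 := N 0)"
  have r: "run F1 (mm h) = mm h0"
  proof -
    have "eval (Load INI) (mm h) = N (l i)" using irange by (intro eval_INL) auto
    moreover have "eval (INW INI) (mm (h(10 := N (l i)))) = N (w i)" using irange by (intro eval_INW) auto
    ultimately show ?thesis unfolding F1_def h0_def by simp
  qed
  have fi0: "FI 0 h0" using h unfolding FI_def h0_def accQ_def coef0 by (auto intro!: Inv0_upd cells_upd simp: N_def)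
  have "spec (While FG FBODY) (mm h0) (1000 * X3) (st (FI n))"
  proof (rule spec_While_st[where P = FI and m = n and Bd = "900 * X2"])
    show "FI 0 h0" by fact
  next
    fix s h' assume s: "s < n" and fi: "FI s h'"
    have "beval FG (mm h')" using s fi unfolding FI_def FG_def by simp
    then show "beval FG (mm h') \<and> spec FBODY (mm h') (900 * X2) (st (FI (Suc s)))" using FBODY_spec[OF fi s] by simp
  next
    fix h' assume "FI n h'"
    then show "\<not> beval FG (mm h') \<and> FI n h'" unfolding FI_def FG_def by simp
  next
    have "n * (1 + bcost FG + 900 * X2) + 1 + bcost FG \<le> Suc n * (1000 * X2)"
      using X_ge unfolding bcost_FG by (intro loop_bound) auto
    then show "n * (1 + bcost FG + 900 * X2) + 1 + bcost FG \<le> 1000 * X3" unfolding X3_def by simp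
  qed
  then have "spec (Seq (While FG FBODY) FOUT) (mm h0) (1000 * X3 + 11) (\<lambda>M. M 0 = accQ n)"
  proof (rule spec_Seq_st)
    fix h' assume "FI n h'"
    then have "h' 16 = accQ n" unfolding FI_def by simp
    moreover have "run FOUT (mm h') = (mm h')(0 := h' 16)" unfolding FOUT_def by (simp add: addr_def)
    ultimately show "spec FOUT (mm h') 11 (\<lambda>M. M 0 = accQ n)" by (intro spec_lf) (auto simp: FOUT_def)
  qed simp
  then show "spec (Seq (While FG FBODY) FOUT) (run F1 (mm h)) (1100 * X4 - cst F1) (\<lambda>M. M 0 = accQ n)"
    unfolding r by (rule spec_mono) (use X_ge cst_F1 in auto)
qed (use X_ge cst_F1 in auto)

lemma PROG_spec: "spec PROG (input_mem n l w lbin i) (3400 * X4) (\<lambda>M. M 0 = accQ n)"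
  unfolding PROG_def mm_init
proof (rule spec_Seq_st[OF SETUP_spec])
  fix h assume h: "Inv0 h \<and> cells h (cntf {})"
  show "spec (Seq ALOOP FINAL) (mm h) (2400 * X4) (\<lambda>M. M 0 = accQ n)"
  proof (rule spec_Seq_st[OF ALOOP_spec])
    fix h' assume "Inv0 h' \<and> cells h' (cntf ({1..n} - {i}))"
    then show "spec FINAL (mm h') (1100 * X4) (\<lambda>M. M 0 = accQ n)" by (intro FINAL_spec) (auto simp: PP_def)
  qed (use h in auto)
qed simp

lemma accQ_shapley: "real_of_rat (accQ n) = shapley n (knapsack_game l w lbin) i"
proof -
  have c: "real_of_rat (coefQ s) = coefR s" for s
    unfolding coefQ_def coefR_def of_rat_divide of_rat_mult of_rat_fact ..
  have "real_of_rat (accQ n) = (\<Sum>s<n. \<Sum>x<Q. real_of_rat (tm s x))" unfolding accQ_def by (simp add: of_rat_sum)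
  also have "\<dots> = (\<Sum>s<n. \<Sum>x<Q. coefR s * real (cntf PP s x) * (real (gf i x lbin) - real (dig x lbin)))"
  proof (intro sum.cong refl)
    fix s x
    show "real_of_rat (tm s x) = coefR s * real (cntf PP s x) * (real (gf i x lbin) - real (dig x lbin))"
      unfolding tm_def N_def of_rat_mult of_rat_diff c of_rat_of_nat_eq ..
  qed
  finally show ?thesis unfolding shapley_cnt PP_def .
qed

lemma X4_bound: "real (3400 * X4) \<le> 81600 * (real lbin * (real_of_int (w_max n l w lbin) + 1) ^ (lbin + 1) * real n ^ 2)"
proof -
  have "real Q = real (Suc W) ^ Suc lbin" unfolding Q_def B_def by (simp only: of_nat_power)
  also have "real (Suc W) = real_of_int (w_max n l w lbin) + 1" unfolding W_eq by simp
  finally have q: "real Q = (real_of_int (w_max n l w lbin) + 1) ^ (lbin + 1)" by simp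
  have Qp: "1 \<le> Q" unfolding Q_def using Bpos by simp
  have a: "Suc n \<le> 2 * n" "Suc Q \<le> 2 * Q" "lbin + 2 \<le> 3 * lbin" using npos Qp lbin_pos by auto
  have "X4 = Suc n * (Suc n * (Suc Q * (lbin + 2)))" unfolding X4_def X3_def X2_def X1_def by (rule refl)
  also have "\<dots> \<le> (2 * n) * ((2 * n) * ((2 * Q) * (3 * lbin)))" using a by (intro mult_le_mono) auto
  also have "\<dots> = 24 * (lbin * Q * n ^ 2)" by (simp add: power2_eq_square algebra_simps)
  finally have "X4 \<le> 24 * (lbin * Q * n ^ 2)" .
  then have "3400 * X4 \<le> 81600 * (lbin * Q * n ^ 2)" by linarith
  then have "real (3400 * X4) \<le> 81600 * (real lbin * real Q * real n ^ 2)"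
    by (metis of_nat_le_iff of_nat_mult of_nat_numeral of_nat_power)
  then show ?thesis unfolding q by simp
qed

end

theorem theorem2:
  "\<exists>(P :: com) (C :: real).
     \<forall>(n :: nat) (l :: nat \<Rightarrow> nat) (w :: nat \<Rightarrow> nat) (lbin :: nat) (i :: nat).
       valid_knapsack n l lbin \<and> i \<in> {1..n} \<longrightarrow>
       (\<exists>t M'. exec P (input_mem n l w lbin i) t M' \<and>
          real_of_rat (M' 0) = shapley n (knapsack_game l w lbin) i \<and>
          real t \<le> C * (real lbin * (real_of_int (w_max n l w lbin) + 1) ^ (lbin + 1) * real n ^ 2))"
proof -
  have "\<forall>(n :: nat) (l :: nat \<Rightarrow> nat) (w :: nat \<Rightarrow> nat) (lbin :: nat) (i :: nat).
       valid_knapsack n l lbin \<and> i \<in> {1..n} \<longrightarrow>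
       (\<exists>t M'. exec PROG (input_mem n l w lbin i) t M' \<and>
          real_of_rat (M' 0) = shapley n (knapsack_game l w lbin) i \<and>
          real t \<le> 81600 * (real lbin * (real_of_int (w_max n l w lbin) + 1) ^ (lbin + 1) * real n ^ 2))"
  proof (intro allI impI)
    fix n l w lbin i
    assume a: "valid_knapsack n l lbin \<and> i \<in> {1..n}"
    then interpret KS n l w lbin i by unfold_locales auto
    obtain t M' where e: "exec PROG (input_mem n l w lbin i) t M'" "t \<le> 3400 * X4" "M' 0 = accQ n"
      using PROG_spec unfolding spec_def by blast
    have "real t \<le> real (3400 * X4)" using e(2) by linarith
    show "\<exists>t M'. exec PROG (input_mem n l w lbin i) t M' \<and>
            real_of_rat (M' 0) = shapley n (knapsack_game l w lbin) i \<and>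
            real t \<le> 81600 * (real lbin * (real_of_int (w_max n l w lbin) + 1) ^ (lbin + 1) * real n ^ 2)"
    proof (intro exI conjI)
      show "exec PROG (input_mem n l w lbin i) t M'" by (rule e(1))
      show "real_of_rat (M' 0) = shapley n (knapsack_game l w lbin) i" using e(3) accQ_shapley by simp
      show "real t \<le> 81600 * (real lbin * (real_of_int (w_max n l w lbin) + 1) ^ (lbin + 1) * real n ^ 2)"
        using \<open>real t \<le> real (3400 * X4)\<close> X4_bound by (rule order_trans)
    qed
  qed
  then show ?thesis by blast
qed


end
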